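(* Suppose $C_0$ is sufficiently large. Then for every outcome of the random choices, if $f_1,f_2,f_3,f_4\in\mathcal F$ satisfy $n_{f_1}+n_{f_2}=n_{f_3}+n_{f_4}$, then $\{f_1,f_2\}=\{f_3,f_4\}$. Consequently $S=\{n_f:f\in\mathcal F\}$ is always a Sidon set.
   Context: Generalised base notation: for a sequence $\boldsymbol b=(b_1,b_2,\dots)$ of integers $\ge 2$ and arbitrary integers $x_1,\dots,x_n$, write $[x_n\,\dots\,x_1]_{\boldsymbol b}:=x_1+x_2b_1+\dots+x_nb_1b_2\cdots b_{n-1}$. Standing data: Fix a prime $p$ and a set $A\subset\{1,\dots,\lfloor p/2\rfloor-1\}$ such that $A\cap(A+A+\{0,1\})=\emptyset$ and $A+A+A$ contains $p+2$ consecutive integers. Let $c=0.35$. Let $C_0>100p$ be a large absolute constant. Let $q\ge C_0$ be a prime power. For $d\ge1$ let $\mathcal I_d$ be the set of irreducible monic polynomials of degree $d$ in $\mathbb F_q[t]$. For $i\ge1$ let $g_i\in\mathcal I_{2i-1}$ be arbitrary and $\omega_i$ a generator of $(\mathbb F_q[t]/(g_i))^\times$. For $k\ge C_0$ let $\mathcal F_k:=\bigcup_{i:\,ck^2\le 2i<c(k+1)^2}\mathcal I_{2i}$ and $\mathcal F:=\bigcup_{k\ge C_0}\mathcal F_k$. Let $b_i=q^i-1$ for $i$ odd and $b_i=p$ for $i$ even. For $k\ge C_0$, $f\in\mathcal F_k$: $e_i(f)$ ($1\le i\le k$) is the unique integer with $0\le e_i(f)<q^{2i-1}-1$ and $\omega_i^{e_i(f)}\equiv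 f\pmod{g_i}$; $r_1(f),\dots,r_k(f)$ are uniform on $A$; $s(f)$ is uniform on $\{1,\dots,q^{3k}\}$; all these random variables (over all $f,i$) are independent. $n_f:=[s(f)\,r_k(f)\,e_k(f)\,\dots\,r_1(f)\,e_1(f)]_{\boldsymbol b}$, and $S:=\{n_f:f\in\mathcal F\}$. A Sidon set is a set of positive integers all of whose pairwise sums $s_1+s_2$ ($s_1\le s_2$) are distinct. *)

theory Defs
  imports Complex_Main "HOL-Computational_Algebra.Primes" "HOL-Algebra.Polynomial_Divisibility"
begin

text \<open>Polynomials over a (finite) field R are the HOL-Algebra coefficient lists
  (highest coefficient first) in the ring poly_ring R = F_q[t].\<close>

definition Irr :: "('a, 'b) ring_scheme \<Rightarrow> nat \<Rightarrow> 'a list set" where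
  "Irr R d = {f. f \<in> carrier (poly_ring R) \<and> pirreducible\<^bsub>R\<^esub> (carrier R) f
                  \<and> lead_coeff f = \<one>\<^bsub>R\<^esub> \<and> degree f = d}"

definition pcong :: "('a, 'b) ring_scheme \<Rightarrow> 'a list \<Rightarrow> 'a list \<Rightarrow> 'a list \<Rightarrow> bool" where
  "pcong R g a b \<longleftrightarrow> g pdivides\<^bsub>R\<^esub> (a \<ominus>\<^bsub>poly_ring R\<^esub> b)"

definition is_gen :: "('a, 'b) ring_scheme \<Rightarrow> 'a list \<Rightarrow> 'a list \<Rightarrow> bool" where
  "is_gen R g w \<longleftrightarrow> w \<in> carrier (poly_ring R) \<and> \<not> g pdivides\<^bsub>R\<^esub> w \<and>
     (\<forall>h \<in> carrier (poly_ring R). \<not> g pdivides\<^bsub>R\<^esub> h \<longrightarrow>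
        (\<exists>e::nat. pcong R g (w [^]\<^bsub>poly_ring R\<^esub> e) h))"

definition dlog :: "('a, 'b) ring_scheme \<Rightarrow> 'a list \<Rightarrow> 'a list \<Rightarrow> 'a list \<Rightarrow> nat" where
  "dlog R g w f = (THE e. e < card (carrier R) ^ degree g - 1 \<and>
                          pcong R g (w [^]\<^bsub>poly_ring R\<^esub> e) f)"

definition cc :: real where "cc = 35 / 100"

definition Fam :: "('a, 'b) ring_scheme \<Rightarrow> nat \<Rightarrow> 'a list set" where
  "Fam R k = (\<Union> {Irr R (2 * i) | i. 1 \<le> i \<and> cc * real k ^ 2 \<le> real (2 * i)
                                     \<and> real (2 * i) < cc * (real k + 1) ^ 2})"

definition FF :: "('a, 'b) ring_scheme \<Rightarrow> real \<Rightarrow> 'a list set" where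
  "FF R C0 = (\<Union> {Fam R k | k. real k \<ge> C0})"

definition kof :: "('a, 'b) ring_scheme \<Rightarrow> 'a list \<Rightarrow> nat" where
  "kof R f = (THE k. f \<in> Fam R k)"

definition genbase :: "(nat \<Rightarrow> nat) \<Rightarrow> nat list \<Rightarrow> nat" where
  "genbase b xs = (\<Sum>j<length xs. xs ! j * (\<Prod>l<j. b (Suc l)))"

definition bseq :: "nat \<Rightarrow> nat \<Rightarrow> nat \<Rightarrow> nat" where
  "bseq q p i = (if odd i then q ^ i - 1 else p)"

text \<open>n_f = [s r_k e_k ... r_1 e_1]_b where k = kof f.\<close>
definition nf :: "('a, 'b) ring_scheme \<Rightarrow> nat \<Rightarrow> (nat \<Rightarrow> 'a list) \<Rightarrow> (nat \<Rightarrow> 'a list)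
    \<Rightarrow> ('a list \<Rightarrow> nat \<Rightarrow> nat) \<Rightarrow> ('a list \<Rightarrow> nat) \<Rightarrow> 'a list \<Rightarrow> nat" where
  "nf R p g w r s f =
     (let k = kof R f in
      genbase (bseq (card (carrier R)) p)
        (map (\<lambda>j. if j = 2 * k then s f
                   else if even j then dlog R (g (j div 2 + 1)) (w (j div 2 + 1)) f
                   else r f ((j + 1) div 2))
             [0..<2 * k + 1]))"

definition sidon :: "nat set \<Rightarrow> bool" where
  "sidon S \<longleftrightarrow> (\<forall>x\<in>S. 0 < x) \<and>
     (\<forall>a\<in>S. \<forall>b\<in>S. \<forall>c\<in>S. \<forall>d\<in>S. a \<le> b \<longrightarrow> c \<le> d \<longrightarrow> a + b = c + d \<longrightarrow> a = c \<and> b = d)"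

end

theory Submission
  imports Defs
begin

context field
begin

lemma UPd: "domain (poly_ring R)"
  by (rule univ_poly_is_domain[OF carrier_is_subring])

lemma UPp: "principal_domain (poly_ring R)"
  by (rule univ_poly_is_principal[OF carrier_is_subfield])

lemma pdiv_iff: "a pdivides b \<longleftrightarrow> a divides\<^bsub>poly_ring R\<^esub> b"
  by (simp add: pdivides_def)

lemma pcong_iff_pmod:
  assumes "a \<in> carrier (poly_ring R)" "b \<in> carrier (poly_ring R)" "g \<in> carrier (poly_ring R)"
  shows "pcong R g a b \<longleftrightarrow> a pmod g = b pmod g"
  unfolding pcong_def using same_pmod_iff_pdivides[OF carrier_is_subfield assms] by simp

lemma pirr_prime:
  assumes "g \<in> carrier (poly_ring R)" "pirreducible (carrier R) g"
    and "a \<in> carrier (poly_ring R)" "b \<in> carrier (poly_ring R)"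
    and "g pdivides (a \<otimes>\<^bsub>poly_ring R\<^esub> b)"
  shows "g pdivides a \<or> g pdivides b"
proof -
  have "pprime (carrier R) g" using pprime_iff_pirreducible[OF carrier_is_subfield assms(1)] assms(2) by simp
  then show ?thesis using pprimeE(3)[OF carrier_is_subfield assms(1) _ assms(3,4,5)] by simp
qed

lemma pirr_not_unit:
  assumes "g \<in> carrier (poly_ring R)" "pirreducible (carrier R) g"
  shows "g \<noteq> []" "g \<notin> Units (poly_ring R)"
  using pirreducibleE[OF carrier_is_subring assms] by auto

lemma pirr_dvd_pirr_length:
  assumes g: "g \<in> carrier (poly_ring R)" "pirreducible (carrier R) g"
    and f: "f \<in> carrier (poly_ring R)" "pirreducible (carrier R) f"
    and d: "g pdivides f"
  shows "length g = length f"
proof -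
  interpret UP: domain "poly_ring R" by (rule UPd)
  obtain c where c: "c \<in> carrier (poly_ring R)" "f = g \<otimes>\<^bsub>poly_ring R\<^esub> c"
    using d unfolding pdiv_iff factor_def by blast
  have "g \<in> Units (poly_ring R) \<or> c \<in> Units (poly_ring R)"
    using UP.ring_irreducibleE(5)[OF f(1) f(2) g(1) c(1) c(2)] .
  then have cu: "c \<in> Units (poly_ring R)" using pirr_not_unit[OF g] by blast
  have "g \<sim>\<^bsub>poly_ring R\<^esub> f"
  proof (rule associatedI)
    show "g divides\<^bsub>poly_ring R\<^esub> f" using d unfolding pdiv_iff .
    have "g = f \<otimes>\<^bsub>poly_ring R\<^esub> inv\<^bsub>poly_ring R\<^esub> c"
      using c cu g(1) by (simp add: UP.m_assoc UP.Units_r_inv)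
    then show "f divides\<^bsub>poly_ring R\<^esub> g" using cu by (intro dividesI) auto
  qed
  then show ?thesis
    using associated_polynomials_imp_same_length[OF carrier_is_subring g(1) f(1)] by simp
qed

lemma monic_assoc_eq:
  assumes g: "g \<in> carrier (poly_ring R)" and f: "f \<in> carrier (poly_ring R)"
    and a: "g \<sim>\<^bsub>poly_ring R\<^esub> f" and lg: "lead_coeff g = \<one>" and lf: "lead_coeff f = \<one>"
    and ne: "f \<noteq> []"
  shows "g = f"
proof -
  interpret UP: domain "poly_ring R" by (rule UPd)
  obtain k where k: "k \<in> carrier R - {\<zero>}" "g = [k] \<otimes>\<^bsub>poly_ring R\<^esub> f"
    using associated_polynomials_iff[OF carrier_is_subfield g f] a by blast
  have pk: "polynomial (carrier R) [k]" using k(1) by (intro const_is_polynomial) simp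
  have pf: "polynomial (carrier R) f" using f by (simp add: univ_poly_carrier)
  have "lead_coeff g = k \<otimes> lead_coeff f"
    using poly_mult_lead_coeff[OF carrier_is_subring pk pf _ ne] k(2) by (simp add: univ_poly_mult)
  then have "k = \<one>" using lg lf k(1) by simp
  then show ?thesis using k(2) f UP.l_one by (simp add: univ_poly_one)
qed

lemma monic_pirr_dvd_eq:
  assumes g: "g \<in> Irr R d" and f: "f \<in> Irr R d'" and dv: "g pdivides f"
  shows "g = f"
proof -
  interpret UP: domain "poly_ring R" by (rule UPd)
  have gc: "g \<in> carrier (poly_ring R)" "pirreducible (carrier R) g" "lead_coeff g = \<one>"
    using g by (auto simp: Irr_def)
  have fc: "f \<in> carrier (poly_ring R)" "pirreducible (carrier R) f" "lead_coeff f = \<one>"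
    using f by (auto simp: Irr_def)
  obtain c where c: "c \<in> carrier (poly_ring R)" "f = g \<otimes>\<^bsub>poly_ring R\<^esub> c"
    using dv unfolding pdiv_iff factor_def by blast
  have "g \<in> Units (poly_ring R) \<or> c \<in> Units (poly_ring R)"
    using UP.ring_irreducibleE(5)[OF fc(1) fc(2) gc(1) c(1) c(2)] .
  then have cu: "c \<in> Units (poly_ring R)" using pirr_not_unit[OF gc(1,2)] by blast
  have "g \<sim>\<^bsub>poly_ring R\<^esub> f"
  proof (rule associatedI)
    show "g divides\<^bsub>poly_ring R\<^esub> f" using dv unfolding pdiv_iff .
    have "g = f \<otimes>\<^bsub>poly_ring R\<^esub> inv\<^bsub>poly_ring R\<^esub> c"
      using c cu gc(1) by (simp add: UP.m_assoc UP.Units_r_inv)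
    then show "f divides\<^bsub>poly_ring R\<^esub> g" using cu by (intro dividesI) auto
  qed
  then show ?thesis using monic_assoc_eq[OF gc(1) fc(1) _ gc(3) fc(3)] pirr_not_unit[OF fc(1,2)] by simp
qed

lemma two_two_unique:
  assumes f1: "f1 \<in> Irr R d1" and f2: "f2 \<in> Irr R d2" and f3: "f3 \<in> Irr R d3" and f4: "f4 \<in> Irr R d4"
    and eq: "f1 \<otimes>\<^bsub>poly_ring R\<^esub> f2 = f3 \<otimes>\<^bsub>poly_ring R\<^esub> f4"
  shows "{f1, f2} = {f3, f4}"
proof -
  interpret UP: domain "poly_ring R" by (rule UPd)
  have c: "f1 \<in> carrier (poly_ring R)" "f2 \<in> carrier (poly_ring R)" "f3 \<in> carrier (poly_ring R)" "f4 \<in> carrier (poly_ring R)"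
    using f1 f2 f3 f4 by (auto simp: Irr_def)
  have p1: "pirreducible (carrier R) f1" using f1 by (auto simp: Irr_def)
  have "f1 pdivides (f3 \<otimes>\<^bsub>poly_ring R\<^esub> f4)"
    unfolding pdiv_iff eq[symmetric] using c by (intro dividesI[of f2]) auto
  then have "f1 pdivides f3 \<or> f1 pdivides f4" using pirr_prime[OF c(1) p1 c(3,4)] by simp
  then have o: "f1 = f3 \<or> f1 = f4" using monic_pirr_dvd_eq f1 f3 f4 by blast
  have nz: "f1 \<noteq> \<zero>\<^bsub>poly_ring R\<^esub>" using pirr_not_unit[OF c(1) p1] by (simp add: univ_poly_zero)
  from o show ?thesis
  proof
    assume "f1 = f3"
    then have "f2 = f4" using eq UP.m_lcancel[OF nz c(1) c(2) c(4)] by simp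
    with \<open>f1 = f3\<close> show ?thesis by simp
  next
    assume "f1 = f4"
    then have "f1 \<otimes>\<^bsub>poly_ring R\<^esub> f2 = f1 \<otimes>\<^bsub>poly_ring R\<^esub> f3" using eq c UP.m_comm by simp
    then have "f2 = f3" using UP.m_lcancel[OF nz c(1) c(2) c(3)] by simp
    with \<open>f1 = f4\<close> show ?thesis by auto
  qed
qed

end

context field
begin

lemma deg_accum:
  assumes "finite S"
  shows "h \<in> carrier (poly_ring R) \<Longrightarrow> h \<noteq> [] \<Longrightarrow>
    (\<forall>i\<in>S. G i \<in> carrier (poly_ring R) \<and> pirreducible (carrier R) (G i) \<and> G i pdivides h) \<Longrightarrow>
    (\<forall>i\<in>S. \<forall>j\<in>S. i \<noteq> j \<longrightarrow> \<not> G j pdivides G i) \<Longrightarrow>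
    (\<Sum>i\<in>S. degree (G i)) \<le> degree h"
  using assms
proof (induction S arbitrary: h rule: finite_induct)
  case empty then show ?case by simp
next
  case (insert i S)
  interpret UP: domain "poly_ring R" by (rule UPd)
  have Gi: "G i \<in> carrier (poly_ring R)" "pirreducible (carrier R) (G i)" "G i pdivides h"
    using bspec[OF insert.prems(3), of i] by simp_all
  obtain h' where h': "h' \<in> carrier (poly_ring R)" "h = G i \<otimes>\<^bsub>poly_ring R\<^esub> h'"
    using Gi(3) unfolding pdiv_iff factor_def by blast
  have h'ne: "h' \<noteq> []"
  proof
    assume "h' = []"
    then have "h = G i \<otimes>\<^bsub>poly_ring R\<^esub> \<zero>\<^bsub>poly_ring R\<^esub>" using h' by (simp add: univ_poly_zero)
    then have "h = []" using Gi(1) UP.r_null by (simp add: univ_poly_zero)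
    then show False using insert.prems(2) by simp
  qed
  have "\<forall>j\<in>S. G j \<in> carrier (poly_ring R) \<and> pirreducible (carrier R) (G j) \<and> G j pdivides h'"
  proof
    fix j assume j: "j \<in> S"
    have jS: "j \<in> insert i S" using j by simp
    have Gj: "G j \<in> carrier (poly_ring R)" "pirreducible (carrier R) (G j)" "G j pdivides h"
      using bspec[OF insert.prems(3) jS] by simp_all
    have "j \<noteq> i" using j insert.hyps(2) by blast
    then have "\<not> G j pdivides G i" using bspec[OF bspec[OF insert.prems(4), of i] jS] by simp
    moreover have "G j pdivides G i \<or> G j pdivides h'"
      using pirr_prime[OF Gj(1,2) Gi(1) h'(1)] Gj(3) h'(2) by simp
    ultimately show "G j \<in> carrier (poly_ring R) \<and> pirreducible (carrier R) (G j) \<and> G j pdivides h'"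
      using Gj by blast
  qed
  moreover have "\<forall>a\<in>S. \<forall>b\<in>S. a \<noteq> b \<longrightarrow> \<not> G b pdivides G a"
    using insert.prems(4) by (meson insertCI)
  ultimately have IH: "(\<Sum>j\<in>S. degree (G j)) \<le> degree h'"
    by (rule insert.IH[OF h'(1) h'ne])
  have Gine: "G i \<noteq> []" using pirr_not_unit[OF Gi(1,2)] by simp
  have "degree h = degree (G i) + degree h'"
    using poly_mult_degree_eq[OF carrier_is_subring, of "G i" h'] Gi(1) h'(1) Gine h'ne h'(2)
    by (simp add: univ_poly_carrier univ_poly_mult)
  then show ?case using IH insert.hyps by simp
qed

lemma pcong_mult:
  assumes c: "a \<in> carrier (poly_ring R)" "a' \<in> carrier (poly_ring R)" "b \<in> carrier (poly_ring R)" "b' \<in> carrier (poly_ring R)"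
    and g: "g \<in> carrier (poly_ring R)"
    and h1: "pcong R g a a'" and h2: "pcong R g b b'"
  shows "pcong R g (a \<otimes>\<^bsub>poly_ring R\<^esub> b) (a' \<otimes>\<^bsub>poly_ring R\<^esub> b')"
proof -
  interpret UP: cring "poly_ring R" by (rule univ_poly_is_cring[OF carrier_is_subring])
  obtain x where x: "x \<in> carrier (poly_ring R)" "a \<ominus>\<^bsub>poly_ring R\<^esub> a' = g \<otimes>\<^bsub>poly_ring R\<^esub> x"
    using h1 unfolding pcong_def pdiv_iff factor_def by blast
  obtain y where y: "y \<in> carrier (poly_ring R)" "b \<ominus>\<^bsub>poly_ring R\<^esub> b' = g \<otimes>\<^bsub>poly_ring R\<^esub> y"
    using h2 unfolding pcong_def pdiv_iff factor_def by blast
  have "a \<otimes>\<^bsub>poly_ring R\<^esub> b \<ominus>\<^bsub>poly_ring R\<^esub> a' \<otimes>\<^bsub>poly_ring R\<^esub> b' =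
        (a \<ominus>\<^bsub>poly_ring R\<^esub> a') \<otimes>\<^bsub>poly_ring R\<^esub> b \<oplus>\<^bsub>poly_ring R\<^esub> a' \<otimes>\<^bsub>poly_ring R\<^esub> (b \<ominus>\<^bsub>poly_ring R\<^esub> b')"
    using c by algebra
  also have "\<dots> = (g \<otimes>\<^bsub>poly_ring R\<^esub> x) \<otimes>\<^bsub>poly_ring R\<^esub> b \<oplus>\<^bsub>poly_ring R\<^esub> a' \<otimes>\<^bsub>poly_ring R\<^esub> (g \<otimes>\<^bsub>poly_ring R\<^esub> y)"
    using x y by simp
  also have "\<dots> = g \<otimes>\<^bsub>poly_ring R\<^esub> (x \<otimes>\<^bsub>poly_ring R\<^esub> b \<oplus>\<^bsub>poly_ring R\<^esub> a' \<otimes>\<^bsub>poly_ring R\<^esub> y)"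
    using c g x y by algebra
  finally show ?thesis unfolding pcong_def pdiv_iff using c x y
    by (intro dividesI[of "x \<otimes>\<^bsub>poly_ring R\<^esub> b \<oplus>\<^bsub>poly_ring R\<^esub> a' \<otimes>\<^bsub>poly_ring R\<^esub> y"]) auto
qed

lemma card_res:
  assumes fin: "finite (carrier R)" and d: "d \<ge> 1"
  shows "card {h \<in> carrier (poly_ring R). degree h < d} = card (carrier R) ^ d"
proof -
  let ?L = "{xs. set xs \<subseteq> carrier R \<and> length xs = d}"
  let ?Res = "{h \<in> carrier (poly_ring R). degree h < d}"
  have inj: "inj_on normalize ?L"
  proof (rule inj_onI)
    fix xs ys assume xs: "xs \<in> ?L" and ys: "ys \<in> ?L" and e: "normalize xs = normalize ys"
    have "xs = replicate (length xs - length (normalize xs)) \<zero> @ normalize xs" by (rule normalize_trick)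
    also have "\<dots> = replicate (length ys - length (normalize ys)) \<zero> @ normalize ys" using xs ys e by simp
    also have "\<dots> = ys" by (rule normalize_trick[symmetric])
    finally show "xs = ys" .
  qed
  have img: "normalize ` ?L = ?Res"
  proof
    show "normalize ` ?L \<subseteq> ?Res"
    proof
      fix h assume "h \<in> normalize ` ?L"
      then obtain xs where xs: "xs \<in> ?L" "h = normalize xs" by blast
      have "polynomial (carrier R) h" using xs normalize_gives_polynomial by simp
      moreover have "length h \<le> d" using xs normalize_length_le[of xs] by simp
      ultimately show "h \<in> ?Res" using d by (auto simp: univ_poly_carrier)
    qed
  next
    show "?Res \<subseteq> normalize ` ?L"
    proof
      fix h assume h: "h \<in> ?Res"
      have ph: "polynomial (carrier R) h" using h by (simp add: univ_poly_carrier)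
      have "length h \<le> d" using h d by auto
      let ?xs = "replicate (d - length h) \<zero> @ h"
      have "?xs \<in> ?L" using \<open>length h \<le> d\<close> polynomial_incl[OF ph] by auto
      moreover have "normalize ?xs = h" using normalize_replicate_zero normalize_polynomial[OF ph] by simp
      ultimately show "h \<in> normalize ` ?L" by (metis image_eqI)
    qed
  qed
  have "card ?Res = card ?L" using card_image[OF inj] img by simp
  also have "\<dots> = card (carrier R) ^ d" using card_lists_length_eq[OF fin] .
  finally show ?thesis .
qed

end

lemma (in cring) aux_factor: "x \<in> carrier R \<Longrightarrow> y \<in> carrier R \<Longrightarrow> x \<otimes> y \<ominus> x = x \<otimes> (y \<ominus> \<one>)"
  by (simp add: a_minus_def r_distr r_minus)

context field
begin

lemma card_carrier_ge2: "finite (carrier R) \<Longrightarrow> card (carrier R) \<ge> 2"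
proof -
  assume fin: "finite (carrier R)"
  have "{\<zero>, \<one>} \<subseteq> carrier R" by simp
  then have "card {\<zero>, \<one>} \<le> card (carrier R)" by (rule card_mono[OF fin])
  moreover have "card {\<zero>, \<one>} = 2" using zero_not_one by simp
  ultimately show ?thesis by simp
qed

lemma gen_facts:
  assumes fin: "finite (carrier R)"
    and g: "g \<in> carrier (poly_ring R)" "pirreducible (carrier R) g" "degree g \<ge> 1"
    and w: "is_gen R g w"
  defines "N \<equiv> card (carrier R) ^ degree g - 1"
  shows "N \<ge> 1"
    and "\<And>e. pcong R g (w [^]\<^bsub>poly_ring R\<^esub> e) (w [^]\<^bsub>poly_ring R\<^esub> (e mod N))"
    and "\<And>h. h \<in> carrier (poly_ring R) \<Longrightarrow> \<not> g pdivides h \<Longrightarrow> (\<exists>!e. e < N \<and> pcong R g (w [^]\<^bsub>poly_ring R\<^esub> e) h)"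
proof -
  interpret UP: cring "poly_ring R" by (rule univ_poly_is_cring[OF carrier_is_subring])
  interpret UPD: domain "poly_ring R" by (rule UPd)
  let ?P = "poly_ring R"
  define d where "d = degree g"
  have wc: "w \<in> carrier ?P" and ndw: "\<not> g pdivides w"
    and gen: "\<And>h. h \<in> carrier ?P \<Longrightarrow> \<not> g pdivides h \<Longrightarrow> \<exists>e::nat. pcong R g (w [^]\<^bsub>?P\<^esub> e) h"
    using w unfolding is_gen_def by auto
  have gne: "g \<noteq> []" using pirr_not_unit[OF g(1,2)] by simp
  have wpc: "\<And>e::nat. w [^]\<^bsub>?P\<^esub> e \<in> carrier ?P" using wc by simp
  have ndpow: "\<And>e::nat. \<not> g pdivides (w [^]\<^bsub>?P\<^esub> e)"
  proof -
    fix e :: nat show "\<not> g pdivides (w [^]\<^bsub>?P\<^esub> e)"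
    proof (induction e)
      case 0
      have "\<not> g divides\<^bsub>?P\<^esub> \<one>\<^bsub>?P\<^esub>" using UP.divides_one[OF g(1)] pirr_not_unit[OF g(1,2)] by simp
      then show ?case by (simp add: pdiv_iff)
    next
      case (Suc e)
      show ?case
      proof
        assume "g pdivides (w [^]\<^bsub>?P\<^esub> Suc e)"
        then have "g pdivides (w [^]\<^bsub>?P\<^esub> e \<otimes>\<^bsub>?P\<^esub> w)" by simp
        then have "g pdivides (w [^]\<^bsub>?P\<^esub> e) \<or> g pdivides w" using pirr_prime[OF g(1,2) wpc wc] by simp
        then show False using Suc.IH ndw by simp
      qed
    qed
  qed
  define \<rho> where "\<rho> e = (w [^]\<^bsub>?P\<^esub> (e::nat)) pmod g" for e
  define Res where "Res = {h \<in> carrier ?P. degree h < d} - {[]}"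
  have finR: "finite {h \<in> carrier ?P. degree h < d}"
  proof (rule card_ge_0_finite)
    show "card {h \<in> carrier ?P. degree h < d} > 0" using card_res[OF fin] g(3) fin card_carrier_ge2[OF fin]
      unfolding d_def by simp
  qed
  have cardRes: "card Res = N"
  proof -
    have "[] \<in> {h \<in> carrier ?P. degree h < d}" using g(3) unfolding d_def by (simp add: univ_poly_zero_closed)
    then have "card Res = card {h \<in> carrier ?P. degree h < d} - 1" unfolding Res_def using finR by simp
    then show ?thesis using card_res[OF fin g(3)] unfolding N_def d_def by simp
  qed
  have finRes: "finite Res" using finR unfolding Res_def by simp
  have pcong_rho: "\<And>a b. a \<in> carrier ?P \<Longrightarrow> b \<in> carrier ?P \<Longrightarrow> pcong R g a b \<longleftrightarrow> a pmod g = b pmod g"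
    using pcong_iff_pmod g(1) by simp
  have rho_in: "\<And>e. \<rho> e \<in> Res"
  proof -
    fix e
    have c: "\<rho> e \<in> carrier ?P" unfolding \<rho>_def using long_division_closed[OF carrier_is_subfield wpc g(1)] by simp
    have "\<rho> e = [] \<or> degree (\<rho> e) < degree g" unfolding \<rho>_def using pmod_degree[OF carrier_is_subfield wpc g(1) gne] .
    then have dg: "degree (\<rho> e) < d" using g(3) unfolding d_def by auto
    have "\<rho> e \<noteq> []" using pmod_zero_iff_pdivides[OF carrier_is_subfield wpc g(1)] ndpow unfolding \<rho>_def by simp
    then show "\<rho> e \<in> Res" unfolding Res_def using c dg by simp
  qed
  have surj: "\<And>h. h \<in> Res \<Longrightarrow> \<exists>e. \<rho> e = h"
  proof -
    fix h assume h: "h \<in> Res"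
    have hc: "h \<in> carrier ?P" "h \<noteq> []" "degree h < degree g" using h unfolding Res_def d_def by auto
    have "\<not> g pdivides h"
    proof
      assume "g pdivides h"
      then have "degree g \<le> degree h" by (rule pdivides_imp_degree_le[OF carrier_is_subring g(1) hc(1) hc(2)])
      then show False using hc(3) by simp
    qed
    then obtain e :: nat where "pcong R g (w [^]\<^bsub>?P\<^esub> e) h" using gen hc(1) by blast
    then have "\<rho> e = h pmod g" unfolding \<rho>_def using pcong_rho wpc hc(1) by simp
    also have "\<dots> = h" using pmod_const(2)[OF carrier_is_subfield hc(1) g(1) hc(3)] .
    finally show "\<exists>e. \<rho> e = h" by blast
  qed
  have rho0: "\<rho> 0 = \<one>\<^bsub>?P\<^esub> pmod g" unfolding \<rho>_def by simp
  have shift: "\<And>e t. \<rho> t = \<rho> 0 \<Longrightarrow> \<rho> (e + t) = \<rho> e"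
  proof -
    fix e t :: nat assume "\<rho> t = \<rho> 0"
    then have ht: "pcong R g (w [^]\<^bsub>?P\<^esub> t) \<one>\<^bsub>?P\<^esub>" unfolding rho0 \<rho>_def using pcong_rho wpc by simp
    have he: "pcong R g (w [^]\<^bsub>?P\<^esub> e) (w [^]\<^bsub>?P\<^esub> e)" using pcong_rho wpc by simp
    have "pcong R g (w [^]\<^bsub>?P\<^esub> e \<otimes>\<^bsub>?P\<^esub> w [^]\<^bsub>?P\<^esub> t) (w [^]\<^bsub>?P\<^esub> e \<otimes>\<^bsub>?P\<^esub> \<one>\<^bsub>?P\<^esub>)"
      by (rule pcong_mult[OF wpc wpc wpc UP.one_closed g(1) he ht])
    then have "pcong R g (w [^]\<^bsub>?P\<^esub> (e + t)) (w [^]\<^bsub>?P\<^esub> e)" using wpc wc by (simp add: UP.nat_pow_mult)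
    then show "\<rho> (e + t) = \<rho> e" unfolding \<rho>_def using pcong_rho wpc by simp
  qed
  have cancel: "\<And>a t. \<rho> (a + t) = \<rho> a \<Longrightarrow> \<rho> t = \<rho> 0"
  proof -
    fix a t assume "\<rho> (a + t) = \<rho> a"
    then have "g pdivides (w [^]\<^bsub>?P\<^esub> (a + t) \<ominus>\<^bsub>?P\<^esub> w [^]\<^bsub>?P\<^esub> a)"
      unfolding \<rho>_def using pcong_rho wpc unfolding pcong_def by simp
    moreover have "w [^]\<^bsub>?P\<^esub> (a + t) \<ominus>\<^bsub>?P\<^esub> w [^]\<^bsub>?P\<^esub> a =
        w [^]\<^bsub>?P\<^esub> a \<otimes>\<^bsub>?P\<^esub> (w [^]\<^bsub>?P\<^esub> t \<ominus>\<^bsub>?P\<^esub> \<one>\<^bsub>?P\<^esub>)"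
    proof -
      have "w [^]\<^bsub>?P\<^esub> (a + t) = w [^]\<^bsub>?P\<^esub> a \<otimes>\<^bsub>?P\<^esub> w [^]\<^bsub>?P\<^esub> t" using wc by (simp add: UP.nat_pow_mult)
      moreover have "w [^]\<^bsub>?P\<^esub> a \<otimes>\<^bsub>?P\<^esub> w [^]\<^bsub>?P\<^esub> t \<ominus>\<^bsub>?P\<^esub> w [^]\<^bsub>?P\<^esub> a =
        w [^]\<^bsub>?P\<^esub> a \<otimes>\<^bsub>?P\<^esub> (w [^]\<^bsub>?P\<^esub> t \<ominus>\<^bsub>?P\<^esub> \<one>\<^bsub>?P\<^esub>)"
        using UP.aux_factor[OF wpc[of a] wpc[of t]] .
      ultimately show ?thesis by simp
    qed
    ultimately have "g pdivides (w [^]\<^bsub>?P\<^esub> a \<otimes>\<^bsub>?P\<^esub> (w [^]\<^bsub>?P\<^esub> t \<ominus>\<^bsub>?P\<^esub> \<one>\<^bsub>?P\<^esub>))" by simp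
    then have "g pdivides (w [^]\<^bsub>?P\<^esub> t \<ominus>\<^bsub>?P\<^esub> \<one>\<^bsub>?P\<^esub>)"
      using pirr_prime[OF g(1,2) wpc[of a]] ndpow[of a] wpc[of t] by simp
    then have "pcong R g (w [^]\<^bsub>?P\<^esub> t) \<one>\<^bsub>?P\<^esub>" unfolding pcong_def .
    then show "\<rho> t = \<rho> 0" unfolding rho0 \<rho>_def using pcong_rho wpc by simp
  qed
  have sub: "\<rho> ` {0..N} \<subseteq> Res" using rho_in by blast
  have "card (\<rho> ` {0..N}) \<le> card Res" by (rule card_mono[OF finRes sub])
  then have "card (\<rho> ` {0..N}) < card {0..N}" using cardRes by simp
  then have "\<not> inj_on \<rho> {0..N}" by (rule pigeonhole)
  then obtain a b where ab: "a \<in> {0..N}" "b \<in> {0..N}" "a \<noteq> b" "\<rho> a = \<rho> b" unfolding inj_on_def by blast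
  have "\<exists>t. 0 < t \<and> t \<le> N \<and> \<rho> t = \<rho> 0"
  proof (cases "a < b")
    case True
    then have "\<rho> (a + (b - a)) = \<rho> a" using ab by simp
    then have "\<rho> (b - a) = \<rho> 0" by (rule cancel)
    moreover have "0 < b - a" "b - a \<le> N" using True ab by auto
    ultimately show ?thesis by blast
  next
    case False
    then have lt: "b < a" using ab by simp
    then have "\<rho> (b + (a - b)) = \<rho> b" using ab by simp
    then have "\<rho> (a - b) = \<rho> 0" by (rule cancel)
    moreover have "0 < a - b" "a - b \<le> N" using lt ab by auto
    ultimately show ?thesis by blast
  qed
  then obtain t0 where t0: "0 < t0" "t0 \<le> N" "\<rho> t0 = \<rho> 0" by blast
  define om where "om = (LEAST t. 0 < t \<and> \<rho> t = \<rho> 0)"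
  have om: "0 < om" "\<rho> om = \<rho> 0" "om \<le> t0"
    using LeastI[of "\<lambda>t. 0 < t \<and> \<rho> t = \<rho> 0" t0] Least_le[of "\<lambda>t. 0 < t \<and> \<rho> t = \<rho> 0" t0] t0
    unfolding om_def by auto
  have per: "\<And>e. \<rho> e = \<rho> (e mod om)"
  proof -
    fix e show "\<rho> e = \<rho> (e mod om)"
    proof (induction e rule: less_induct)
      case (less e)
      show ?case
      proof (cases "e < om")
        case True then show ?thesis by simp
      next
        case False
        then have "e = (e - om) + om" by simp
        then have "\<rho> e = \<rho> (e - om)" using shift[OF om(2), of "e - om"] by simp
        also have "\<dots> = \<rho> ((e - om) mod om)" using less.IH[of "e - om"] om(1) False by simp
        also have "(e - om) mod om = e mod om" using False by (simp add: mod_if)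
        finally show ?thesis .
      qed
    qed
  qed
  have inj: "inj_on \<rho> {..<om}"
  proof (rule inj_onI)
    fix a b assume a: "a \<in> {..<om}" and b: "b \<in> {..<om}" and e: "\<rho> a = \<rho> b"
    show "a = b"
    proof (rule ccontr)
      assume "a \<noteq> b"
      then consider "a < b" | "b < a" by linarith
      then show False
      proof cases
        case 1
        then have "\<rho> (a + (b - a)) = \<rho> a" using e by simp
        then have "\<rho> (b - a) = \<rho> 0" by (rule cancel)
        then have "om \<le> b - a" unfolding om_def using 1 by (intro Least_le) simp
        then show False using b 1 by simp
      next
        case 2
        then have "\<rho> (b + (a - b)) = \<rho> b" using e by simp
        then have "\<rho> (a - b) = \<rho> 0" by (rule cancel)
        then have "om \<le> a - b" unfolding om_def using 2 by (intro Least_le) simp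
        then show False using a 2 by simp
      qed
    qed
  qed
  have img: "\<rho> ` {..<om} = Res"
  proof
    show "\<rho> ` {..<om} \<subseteq> Res" using rho_in by auto
    show "Res \<subseteq> \<rho> ` {..<om}"
    proof
      fix h assume "h \<in> Res"
      then obtain e where "\<rho> e = h" using surj by blast
      then have "\<rho> (e mod om) = h" using per[of e] by simp
      moreover have "e mod om \<in> {..<om}" using om(1) by simp
      ultimately show "h \<in> \<rho> ` {..<om}" by blast
    qed
  qed
  have oN: "om = N" using card_image[OF inj] img cardRes by simp
  show "N \<ge> 1" using om(1) oN by simp
  show "\<And>e. pcong R g (w [^]\<^bsub>?P\<^esub> e) (w [^]\<^bsub>?P\<^esub> (e mod N))"
  proof -
    fix e
    have "\<rho> e = \<rho> (e mod N)" using per[of e] oN by simp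
    then show "pcong R g (w [^]\<^bsub>?P\<^esub> e) (w [^]\<^bsub>?P\<^esub> (e mod N))" unfolding \<rho>_def using pcong_rho wpc by simp
  qed
  show "\<And>h. h \<in> carrier ?P \<Longrightarrow> \<not> g pdivides h \<Longrightarrow> (\<exists>!e. e < N \<and> pcong R g (w [^]\<^bsub>?P\<^esub> e) h)"
  proof -
    fix h assume hc: "h \<in> carrier ?P" and nd: "\<not> g pdivides h"
    obtain e0 :: nat where e0: "pcong R g (w [^]\<^bsub>?P\<^esub> e0) h" using gen[OF hc nd] by blast
    have rh: "\<And>e. pcong R g (w [^]\<^bsub>?P\<^esub> e) h \<longleftrightarrow> \<rho> e = h pmod g" unfolding \<rho>_def using pcong_rho wpc hc by simp
    have ex: "e0 mod N < N \<and> pcong R g (w [^]\<^bsub>?P\<^esub> (e0 mod N)) h"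
    proof
      show "e0 mod N < N" using om(1) oN by simp
      have "\<rho> (e0 mod N) = \<rho> e0" using per[of e0] oN by simp
      then show "pcong R g (w [^]\<^bsub>?P\<^esub> (e0 mod N)) h" using rh e0 by simp
    qed
    show "\<exists>!e. e < N \<and> pcong R g (w [^]\<^bsub>?P\<^esub> e) h"
    proof (rule ex1I[where a = "e0 mod N"])
      show "e0 mod N < N \<and> pcong R g (w [^]\<^bsub>?P\<^esub> (e0 mod N)) h" by (rule ex)
    next
      fix e assume e: "e < N \<and> pcong R g (w [^]\<^bsub>?P\<^esub> e) h"
      have "\<rho> e = \<rho> (e0 mod N)" using e ex rh by simp
      moreover have "e \<in> {..<om}" "e0 mod N \<in> {..<om}" using e ex oN by auto
      ultimately show "e = e0 mod N" using inj unfolding inj_on_def by blast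
    qed
  qed
qed

end

lemma (in cring) aux_factor2:
  "x \<in> carrier R \<Longrightarrow> y \<in> carrier R \<Longrightarrow> z \<in> carrier R \<Longrightarrow> x \<otimes> y \<ominus> z \<otimes> y = y \<otimes> (x \<ominus> z)"
  by (simp add: a_minus_def r_distr r_minus m_comm)

context field
begin

lemma Irr_carrier: "f \<in> Irr R d \<Longrightarrow> f \<in> carrier (poly_ring R)"
  and Irr_pirr: "f \<in> Irr R d \<Longrightarrow> pirreducible (carrier R) f"
  and Irr_deg: "f \<in> Irr R d \<Longrightarrow> degree f = d"
  and Irr_lead: "f \<in> Irr R d \<Longrightarrow> lead_coeff f = \<one>"
  by (auto simp: Irr_def)

lemma Irr_ndvd: "g \<in> Irr R d \<Longrightarrow> f \<in> Irr R d' \<Longrightarrow> d \<noteq> d' \<Longrightarrow> \<not> g pdivides f"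
  using monic_pirr_dvd_eq Irr_deg by metis

lemma dlog_facts:
  assumes fin: "finite (carrier R)" and g: "g \<in> Irr R d" and d: "d \<ge> 1" and w: "is_gen R g w"
    and f: "f \<in> Irr R d'" and dd: "d \<noteq> d'"
  shows "dlog R g w f < card (carrier R) ^ d - 1"
    and "pcong R g (w [^]\<^bsub>poly_ring R\<^esub> dlog R g w f) f"
proof -
  have "\<exists>!e. e < card (carrier R) ^ degree g - 1 \<and> pcong R g (w [^]\<^bsub>poly_ring R\<^esub> e) f"
    using gen_facts(3)[OF fin Irr_carrier[OF g] Irr_pirr[OF g] _ w Irr_carrier[OF f] Irr_ndvd[OF g f dd]]
      d Irr_deg[OF g] by simp
  then have "dlog R g w f < card (carrier R) ^ degree g - 1 \<and> pcong R g (w [^]\<^bsub>poly_ring R\<^esub> dlog R g w f) f"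
    unfolding dlog_def by (rule theI')
  then show "dlog R g w f < card (carrier R) ^ d - 1" "pcong R g (w [^]\<^bsub>poly_ring R\<^esub> dlog R g w f) f"
    using Irr_deg[OF g] by auto
qed

lemma cong_from_esum:
  assumes fin: "finite (carrier R)" and g: "g \<in> Irr R d" and d: "d \<ge> 1" and w: "is_gen R g w"
    and c: "f1 \<in> carrier (poly_ring R)" "f2 \<in> carrier (poly_ring R)" "f3 \<in> carrier (poly_ring R)" "f4 \<in> carrier (poly_ring R)"
    and h: "pcong R g (w [^]\<^bsub>poly_ring R\<^esub> (e1::nat)) f1" "pcong R g (w [^]\<^bsub>poly_ring R\<^esub> (e2::nat)) f2"
           "pcong R g (w [^]\<^bsub>poly_ring R\<^esub> (e3::nat)) f3" "pcong R g (w [^]\<^bsub>poly_ring R\<^esub> (e4::nat)) f4"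
    and m: "(e1 + e2) mod (card (carrier R) ^ d - 1) = (e3 + e4) mod (card (carrier R) ^ d - 1)"
  shows "pcong R g (f1 \<otimes>\<^bsub>poly_ring R\<^esub> f2) (f3 \<otimes>\<^bsub>poly_ring R\<^esub> f4)"
proof -
  interpret UP: cring "poly_ring R" by (rule univ_poly_is_cring[OF carrier_is_subring])
  let ?P = "poly_ring R"
  let ?N = "card (carrier R) ^ d - 1"
  have gc: "g \<in> carrier ?P" using Irr_carrier[OF g] .
  have wc: "w \<in> carrier ?P" using w unfolding is_gen_def by simp
  have wpc: "\<And>e::nat. w [^]\<^bsub>?P\<^esub> e \<in> carrier ?P" using wc by simp
  have pm: "\<And>a b. a \<in> carrier ?P \<Longrightarrow> b \<in> carrier ?P \<Longrightarrow> pcong R g a b \<longleftrightarrow> a pmod g = b pmod g"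
    using pcong_iff_pmod gc by simp
  have red: "\<And>e. pcong R g (w [^]\<^bsub>?P\<^esub> e) (w [^]\<^bsub>?P\<^esub> (e mod ?N))"
    using gen_facts(2)[OF fin gc Irr_pirr[OF g] _ w] d Irr_deg[OF g] by simp
  have A: "pcong R g (w [^]\<^bsub>?P\<^esub> e1 \<otimes>\<^bsub>?P\<^esub> w [^]\<^bsub>?P\<^esub> e2) (f1 \<otimes>\<^bsub>?P\<^esub> f2)"
    by (rule pcong_mult[OF wpc c(1) wpc c(2) gc h(1,2)])
  have B: "pcong R g (w [^]\<^bsub>?P\<^esub> e3 \<otimes>\<^bsub>?P\<^esub> w [^]\<^bsub>?P\<^esub> e4) (f3 \<otimes>\<^bsub>?P\<^esub> f4)"
    by (rule pcong_mult[OF wpc c(3) wpc c(4) gc h(3,4)])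
  have "(f1 \<otimes>\<^bsub>?P\<^esub> f2) pmod g = (w [^]\<^bsub>?P\<^esub> e1 \<otimes>\<^bsub>?P\<^esub> w [^]\<^bsub>?P\<^esub> e2) pmod g"
    using A pm c wpc by simp
  also have "\<dots> = (w [^]\<^bsub>?P\<^esub> (e1 + e2)) pmod g" using wc by (simp add: UP.nat_pow_mult)
  also have "\<dots> = (w [^]\<^bsub>?P\<^esub> ((e1 + e2) mod ?N)) pmod g" using red[of "e1 + e2"] pm wpc by simp
  also have "\<dots> = (w [^]\<^bsub>?P\<^esub> ((e3 + e4) mod ?N)) pmod g" using m by simp
  also have "\<dots> = (w [^]\<^bsub>?P\<^esub> (e3 + e4)) pmod g" using red[of "e3 + e4"] pm wpc by simp
  also have "\<dots> = (w [^]\<^bsub>?P\<^esub> e3 \<otimes>\<^bsub>?P\<^esub> w [^]\<^bsub>?P\<^esub> e4) pmod g" using wc by (simp add: UP.nat_pow_mult)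
  also have "\<dots> = (f3 \<otimes>\<^bsub>?P\<^esub> f4) pmod g" using B pm c wpc by simp
  finally show ?thesis using pm c by simp
qed

lemma cong_from_eq:
  assumes g: "g \<in> carrier (poly_ring R)" and w: "w \<in> carrier (poly_ring R)"
    and c: "f2 \<in> carrier (poly_ring R)" "f4 \<in> carrier (poly_ring R)"
    and h: "pcong R g (w [^]\<^bsub>poly_ring R\<^esub> (e::nat)) f2" "pcong R g (w [^]\<^bsub>poly_ring R\<^esub> e) f4"
  shows "pcong R g f2 f4"
proof -
  interpret UP: cring "poly_ring R" by (rule univ_poly_is_cring[OF carrier_is_subring])
  have wpc: "w [^]\<^bsub>poly_ring R\<^esub> e \<in> carrier (poly_ring R)" using w by simp
  show ?thesis using h pcong_iff_pmod[OF _ _ g] c wpc by simp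
qed

lemma cong_cancel:
  assumes g: "g \<in> carrier (poly_ring R)" "pirreducible (carrier R) g"
    and c: "f1 \<in> carrier (poly_ring R)" "f2 \<in> carrier (poly_ring R)" "f3 \<in> carrier (poly_ring R)"
    and nd: "\<not> g pdivides f2"
    and h: "pcong R g (f1 \<otimes>\<^bsub>poly_ring R\<^esub> f2) (f3 \<otimes>\<^bsub>poly_ring R\<^esub> f2)"
  shows "pcong R g f1 f3"
proof -
  interpret UP: cring "poly_ring R" by (rule univ_poly_is_cring[OF carrier_is_subring])
  have "f1 \<otimes>\<^bsub>poly_ring R\<^esub> f2 \<ominus>\<^bsub>poly_ring R\<^esub> f3 \<otimes>\<^bsub>poly_ring R\<^esub> f2 = f2 \<otimes>\<^bsub>poly_ring R\<^esub> (f1 \<ominus>\<^bsub>poly_ring R\<^esub> f3)"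
    using UP.aux_factor2[OF c(1) c(2) c(3)] .
  then have "g pdivides (f2 \<otimes>\<^bsub>poly_ring R\<^esub> (f1 \<ominus>\<^bsub>poly_ring R\<^esub> f3))" using h unfolding pcong_def by simp
  then show ?thesis using pirr_prime[OF g c(2)] nd c unfolding pcong_def by simp
qed

lemma minus_degree:
  assumes "a \<in> carrier (poly_ring R)" "b \<in> carrier (poly_ring R)"
  shows "degree (a \<ominus>\<^bsub>poly_ring R\<^esub> b) \<le> max (degree a) (degree b)"
  using poly_add_degree[of a "map (a_inv R) b"]
  unfolding a_minus_def univ_poly_add univ_poly_a_inv_def'[OF carrier_is_subring assms(2)]
  by auto

lemma eq_from_congs:
  assumes g: "\<And>i. i \<in> S \<Longrightarrow> g i \<in> Irr R (2 * i - 1)" and S: "finite S" "\<And>i. i \<in> S \<Longrightarrow> i \<ge> 1"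
    and c: "a \<in> carrier (poly_ring R)" "b \<in> carrier (poly_ring R)"
    and cg: "\<And>i. i \<in> S \<Longrightarrow> pcong R (g i) a b"
    and da: "degree a < (\<Sum>i\<in>S. 2 * i - 1)" and db: "degree b < (\<Sum>i\<in>S. 2 * i - 1)"
  shows "a = b"
proof (rule ccontr)
  interpret UP: cring "poly_ring R" by (rule univ_poly_is_cring[OF carrier_is_subring])
  assume ne: "a \<noteq> b"
  let ?h = "a \<ominus>\<^bsub>poly_ring R\<^esub> b"
  have hc: "?h \<in> carrier (poly_ring R)" using c by simp
  have hne: "?h \<noteq> []"
  proof
    assume "?h = []"
    then have "?h = \<zero>\<^bsub>poly_ring R\<^esub>" by (simp add: univ_poly_zero)
    then have "a = b" using c UP.r_right_minus_eq by blast
    then show False using ne by simp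
  qed
  have "(\<Sum>i\<in>S. degree (g i)) \<le> degree ?h"
  proof (rule deg_accum[OF S(1) hc hne])
    show "\<forall>i\<in>S. g i \<in> carrier (poly_ring R) \<and> pirreducible (carrier R) (g i) \<and> g i pdivides ?h"
      using g cg Irr_carrier Irr_pirr unfolding pcong_def by blast
    show "\<forall>i\<in>S. \<forall>j\<in>S. i \<noteq> j \<longrightarrow> \<not> g j pdivides g i"
    proof (intro ballI impI)
      fix i j assume i: "i \<in> S" and j: "j \<in> S" and ij: "i \<noteq> j"
      have "2 * j - 1 \<noteq> 2 * i - 1" using S(2)[OF i] S(2)[OF j] ij by simp
      then show "\<not> g j pdivides g i" using Irr_ndvd[OF g[OF j] g[OF i]] by simp
    qed
  qed
  moreover have "(\<Sum>i\<in>S. degree (g i)) = (\<Sum>i\<in>S. 2 * i - 1)"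
  proof (rule sum.cong[OF refl])
    fix i assume "i \<in> S"
    then show "degree (g i) = 2 * i - 1" using Irr_deg[OF g] by blast
  qed
  moreover have "degree ?h \<le> max (degree a) (degree b)" by (rule minus_degree[OF c])
  ultimately show False using da db by linarith
qed

lemma degree_mult:
  assumes "a \<in> carrier (poly_ring R)" "b \<in> carrier (poly_ring R)" "a \<noteq> []" "b \<noteq> []"
  shows "degree (a \<otimes>\<^bsub>poly_ring R\<^esub> b) = degree a + degree b"
  using poly_mult_degree_eq[OF carrier_is_subring, of a b] assms
  by (simp add: univ_poly_carrier univ_poly_mult)

end

definition DD :: "(nat \<Rightarrow> nat) \<Rightarrow> nat \<Rightarrow> nat" where
  "DD b j = (\<Prod>l<j. b (Suc l))"

lemma DD_0[simp]: "DD b 0 = 1" by (simp add: DD_def)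
lemma DD_Suc: "DD b (Suc j) = DD b j * b (Suc j)" by (simp add: DD_def)

lemma DD_pos: "(\<And>l. b l > 0) \<Longrightarrow> DD b j > 0"
  by (induction j) (auto simp: DD_Suc)

lemma DD_mono: assumes "\<And>l. b l > 0" "i \<le> j" shows "DD b i \<le> DD b j"
  using assms(2)
proof (induction j)
  case 0 then show ?case by simp
next
  case (Suc j)
  show ?case
  proof (cases "i = Suc j")
    case False
    then have "DD b i \<le> DD b j" using Suc by simp
    also have "\<dots> \<le> DD b (Suc j)" using assms(1)[of "Suc j"] by (simp add: DD_Suc)
    finally show ?thesis .
  qed simp
qed

lemma DD_dvd: assumes "i \<le> j" shows "DD b i dvd DD b j"
  using assms
proof (induction j)
  case 0 then show ?case by simp
next
  case (Suc j)
  then show ?case by (cases "i = Suc j") (auto simp: DD_Suc)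
qed

lemma lowsum_lt:
  assumes "\<And>l. l < j \<Longrightarrow> x l < b (Suc l)"
  shows "(\<Sum>l<j. x l * DD b l) < DD b j \<or> DD b j = 0"
  using assms
proof (induction j)
  case 0 then show ?case by simp
next
  case (Suc j)
  have xj: "x j < b (Suc j)" using Suc.prems by simp
  from Suc have IH: "(\<Sum>l<j. x l * DD b l) < DD b j \<or> DD b j = 0" by simp
  show ?case
  proof (cases "DD b j = 0")
    case True then show ?thesis by (simp add: DD_Suc)
  next
    case False
    with IH have "(\<Sum>l<j. x l * DD b l) < DD b j" by simp
    moreover have "x j * DD b j \<le> (b (Suc j) - 1) * DD b j" using xj by (intro mult_le_mono1) simp
    ultimately have "(\<Sum>l<Suc j. x l * DD b l) < DD b j + (b (Suc j) - 1) * DD b j"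
      by (simp only: sum.lessThan_Suc)
    also have "\<dots> = DD b (Suc j)" using xj by (cases "b (Suc j)") (auto simp: DD_Suc algebra_simps)
    finally show ?thesis by simp
  qed
qed

lemma genbase_eq: "genbase b xs = (\<Sum>l<length xs. xs ! l * DD b l)"
  by (simp add: genbase_def DD_def)

lemma genbase_mod:
  assumes "\<And>l. l < j \<Longrightarrow> xs ! l < b (Suc l)" "j \<le> length xs" "\<And>l. b l > 0"
  shows "genbase b xs mod DD b j = (\<Sum>l<j. xs ! l * DD b l)"
proof -
  have split: "{..<length xs} = {..<j} \<union> {j..<length xs}" using assms(2) by auto
  have "genbase b xs = (\<Sum>l<j. xs ! l * DD b l) + (\<Sum>l\<in>{j..<length xs}. xs ! l * DD b l)"
    unfolding genbase_eq split by (subst sum.union_disjoint) auto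
  moreover have "DD b j dvd (\<Sum>l\<in>{j..<length xs}. xs ! l * DD b l)"
    by (intro dvd_sum) (auto intro: dvd_mult DD_dvd)
  moreover have "(\<Sum>l<j. xs ! l * DD b l) < DD b j"
    using lowsum_lt[of j "\<lambda>l. xs ! l" b] assms DD_pos[of b j] by auto
  ultimately show ?thesis
    by (metis (no_types, lifting) dvd_def mod_less mod_mult_self2)
qed

lemma bseq_pos: "q \<ge> 2 \<Longrightarrow> p \<ge> 1 \<Longrightarrow> bseq q p l > 0"
proof -
  assume q: "q \<ge> 2" and p: "p \<ge> 1"
  have "q ^ l \<ge> 2 ^ l" using q by (simp add: power_mono)
  moreover have "odd l \<Longrightarrow> (2::nat) ^ l \<ge> 2" using one_less_power[of 2 l] by (cases l) auto
  ultimately show ?thesis using p by (auto simp: bseq_def)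
qed

definition phi :: "nat \<Rightarrow> (nat \<Rightarrow> nat) \<Rightarrow> (nat \<Rightarrow> nat) \<Rightarrow> nat \<Rightarrow> nat \<Rightarrow> nat" where
  "phi k E Rr s j = (if j = 2 * k then s else if even j then E (j div 2 + 1) else Rr ((j + 1) div 2))"

declare upt_Suc[simp del]

lemma digits_nf:
  fixes q p k s :: nat and E Rr :: "nat \<Rightarrow> nat"
  defines "b \<equiv> bseq q p" and "D \<equiv> DD (bseq q p)"
  defines "n \<equiv> genbase b (map (phi k E Rr s) [0..<2 * k + 1])"
  assumes q: "q \<ge> 2" and p: "p \<ge> 2" and k: "k \<ge> 1"
    and E: "\<And>i. 1 \<le> i \<Longrightarrow> i \<le> k \<Longrightarrow> E i < q ^ (2 * i - 1) - 1"
    and Rr: "\<And>i. 1 \<le> i \<Longrightarrow> i \<le> k \<Longrightarrow> Rr i < p"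
    and s: "1 \<le> s" "s \<le> q ^ (3 * k)"
  shows "\<And>i. i < k \<Longrightarrow> n mod D (2 * i + 2) = n mod D (2 * i) + E (Suc i) * D (2 * i) + Rr (Suc i) * D (2 * i + 1)"
    and "\<And>i. i < k \<Longrightarrow> n mod D (2 * i + 1) = n mod D (2 * i) + E (Suc i) * D (2 * i)"
    and "\<And>i. i < k \<Longrightarrow> n mod D (2 * i + 2) < (Rr (Suc i) + 1) * D (2 * i + 1)"
    and "D (2 * k) \<le> n" and "n < D (2 * k + 3)"
proof -
  let ?xs = "map (phi k E Rr s) [0..<2 * k + 1]"
  have bpos: "\<And>l. b l > 0" unfolding b_def using bseq_pos q p by auto
  have bodd: "\<And>i. b (2 * i + 1) = q ^ (2 * i + 1) - 1" unfolding b_def bseq_def by simp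
  have beven: "\<And>i. b (2 * i + 2) = p" unfolding b_def bseq_def by simp
  have len: "length ?xs = 2 * k + 1" by simp
  have nth: "\<And>l. l < 2 * k + 1 \<Longrightarrow> ?xs ! l = phi k E Rr s l" by simp
  have dig: "\<And>l. l < 2 * k \<Longrightarrow> ?xs ! l < b (Suc l)"
  proof -
    fix l assume l: "l < 2 * k"
    show "?xs ! l < b (Suc l)"
    proof (cases "even l")
      case True
      then obtain i where i: "l = 2 * i" by blast
      have "?xs ! l = E (Suc i)" using l i by (simp add: phi_def)
      moreover have "b (Suc l) = q ^ (2 * Suc i - 1) - 1" using bodd[of i] i by simp
      ultimately show ?thesis using E[of "Suc i"] l i by simp
    next
      case False
      then obtain i where i: "l = 2 * i + 1" by (metis oddE)
      have "?xs ! l = Rr (Suc i)" using l i by (simp add: phi_def)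
      moreover have "b (Suc l) = p" using beven[of i] i by simp
      ultimately show ?thesis using Rr[of "Suc i"] l i by simp
    qed
  qed
  define S where "S j = (\<Sum>l<j. ?xs ! l * D l)" for j
  have modS: "\<And>j. j \<le> 2 * k \<Longrightarrow> n mod D j = S j"
    unfolding n_def S_def D_def b_def
    by (rule genbase_mod) (use dig bpos in \<open>auto simp: b_def\<close>)
  have Slt: "\<And>j. j \<le> 2 * k \<Longrightarrow> S j < D j"
    using modS DD_pos[of b] bpos unfolding D_def b_def by (metis mod_less_divisor)
  have DS: "\<And>j. D (Suc j) = D j * b (Suc j)" unfolding D_def b_def by (rule DD_Suc)
  have S_Suc: "\<And>j. S (Suc j) = S j + ?xs ! j * D j" unfolding S_def by simp
  have xe: "\<And>i. i < k \<Longrightarrow> ?xs ! (2 * i) = E (Suc i)" by (simp add: phi_def)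
  have xr: "\<And>i. i < k \<Longrightarrow> ?xs ! (2 * i + 1) = Rr (Suc i)"
    by (simp add: phi_def)
  show "\<And>i. i < k \<Longrightarrow> n mod D (2 * i + 2) = n mod D (2 * i) + E (Suc i) * D (2 * i) + Rr (Suc i) * D (2 * i + 1)"
  proof -
    fix i assume i: "i < k"
    have "S (Suc (Suc (2 * i))) = S (2 * i) + E (Suc i) * D (2 * i) + Rr (Suc i) * D (2 * i + 1)"
      using xe[OF i] xr[OF i] by (simp add: S_Suc)
    then show "n mod D (2 * i + 2) = n mod D (2 * i) + E (Suc i) * D (2 * i) + Rr (Suc i) * D (2 * i + 1)"
      using modS[of "2 * i + 2"] modS[of "2 * i"] i by simp
  qed
  show "\<And>i. i < k \<Longrightarrow> n mod D (2 * i + 1) = n mod D (2 * i) + E (Suc i) * D (2 * i)"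
  proof -
    fix i assume i: "i < k"
    show "n mod D (2 * i + 1) = n mod D (2 * i) + E (Suc i) * D (2 * i)"
      using modS[of "2 * i + 1"] modS[of "2 * i"] i xe[OF i] by (simp add: S_Suc)
  qed
  show "\<And>i. i < k \<Longrightarrow> n mod D (2 * i + 2) < (Rr (Suc i) + 1) * D (2 * i + 1)"
  proof -
    fix i assume i: "i < k"
    have "S (2 * i + 2) = S (2 * i + 1) + Rr (Suc i) * D (2 * i + 1)"
      using xr[OF i] S_Suc[of "2 * i + 1"] by simp
    moreover have "S (2 * i + 1) < D (2 * i + 1)" using Slt i by simp
    ultimately show "n mod D (2 * i + 2) < (Rr (Suc i) + 1) * D (2 * i + 1)"
      using modS[of "2 * i + 2"] i by simp
  qed
  have nS: "n = S (2 * k) + s * D (2 * k)"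
  proof -
    have "n = S (Suc (2 * k))" unfolding n_def S_def genbase_eq D_def b_def by simp
    also have "\<dots> = S (2 * k) + s * D (2 * k)" by (simp add: S_Suc phi_def)
    finally show ?thesis .
  qed
  have "D (2 * k) \<le> s * D (2 * k)" using s by simp
  then show "D (2 * k) \<le> n" using nS by linarith
  have "n < D (2 * k) + s * D (2 * k)" using nS Slt[of "2 * k"] by simp
  also have "\<dots> = (s + 1) * D (2 * k)" by simp
  also have "\<dots> \<le> (q ^ (3 * k) + 1) * D (2 * k)" using s by simp
  also have "\<dots> \<le> D (2 * k + 3)"
  proof -
    have b1: "b (2 * k + 1) \<ge> q ^ (2 * k)"
    proof -
      have "q ^ (2 * k + 1) = q * q ^ (2 * k)" by simp
      also have "\<dots> \<ge> 2 * q ^ (2 * k)" using q by simp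
      finally have "q ^ (2 * k + 1) \<ge> 2 * q ^ (2 * k)" .
      moreover have "q ^ (2 * k) \<ge> 1" using q by simp
      ultimately show ?thesis using bodd[of k] by arith
    qed
    have b3: "b (2 * k + 3) \<ge> q ^ (2 * k + 2)"
    proof -
      have "q ^ (2 * (k + 1) + 1) = q * q ^ (2 * k + 2)" by simp
      also have "\<dots> \<ge> 2 * q ^ (2 * k + 2)" using q by simp
      finally have "q ^ (2 * (k + 1) + 1) \<ge> 2 * q ^ (2 * k + 2)" .
      moreover have "q ^ (2 * k + 2) \<ge> 1" using q by simp
      moreover have "b (2 * k + 3) = q ^ (2 * (k + 1) + 1) - 1" using bodd[of "k + 1"] by (simp add: numeral_3_eq_3)
      ultimately show ?thesis by arith
    qed
    have b2: "b (2 * k + 2) \<ge> 2" using beven[of k] p by simp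
    have qpos: "q ^ (3 * k) \<ge> 1" using q by simp
    have "q ^ (3 * k) + 1 \<le> 2 * q ^ (3 * k)" using qpos by simp
    also have "\<dots> \<le> 2 * q ^ (4 * k + 2)"
      using q power_increasing[of "3 * k" "4 * k + 2" q] by (simp del: power_Suc)
    also have "\<dots> = q ^ (2 * k) * 2 * q ^ (2 * k + 2)" by (simp add: power_add[symmetric] algebra_simps)
    also have "\<dots> \<le> b (2 * k + 1) * b (2 * k + 2) * b (2 * k + 3)"
      using b1 b2 b3 by (intro mult_le_mono) auto
    finally have *: "q ^ (3 * k) + 1 \<le> b (2 * k + 1) * b (2 * k + 2) * b (2 * k + 3)" .
    have "D (2 * k + 3) = D (2 * k) * (b (2 * k + 1) * b (2 * k + 2) * b (2 * k + 3))"
      using DS[of "2 * k"] DS[of "2 * k + 1"] DS[of "2 * k + 2"] by (simp add: algebra_simps numeral_3_eq_3)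
    then show ?thesis using mult_le_mono1[OF *, of "D (2 * k)"] by (simp only: mult.commute)
  qed
  finally show "n < D (2 * k + 3)" .
qed

declare upt_Suc[simp]

lemma div_digit: "(x::nat) < W \<Longrightarrow> (x + r * W) div W = r"
  by (cases "W = 0") auto

lemma T1_arith:
  fixes n1 n2 n3 n4 U V W Z B p l1 l2 l4 e1 e2 e4 r1 r2 r4 :: nat
  assumes VU: "V = p * U" and WV: "W = V * B" and ZW: "Z = p * W" and B: "B \<ge> 1"
    and n1: "n1 mod Z = l1 + e1 * V + r1 * W" "l1 < a1 * U" "e1 < B"
    and n2: "n2 mod Z = l2 + e2 * V + r2 * W" "l2 < a2 * U" "e2 < B"
    and n4: "n4 mod Z = l4 + e4 * V + r4 * W" "l4 < a4 * U" "e4 < B"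
    and n3: "n3 < U"
    and a: "a1 + a2 \<le> p" "a4 + 1 \<le> p"
    and r: "r1 + r2 + 2 \<le> p" "r4 + 1 \<le> p"
    and eq: "n1 + n2 = n3 + n4"
  shows "r4 = r1 + r2 \<or> r4 = r1 + r2 + 1"
proof -
  have l12: "l1 + l2 < V"
  proof -
    have "l1 + l2 < a1 * U + a2 * U" using n1(2) n2(2) by simp
    also have "\<dots> = (a1 + a2) * U" by (simp add: algebra_simps)
    also have "\<dots> \<le> p * U" using a(1) by (rule mult_le_mono1)
    finally show ?thesis using VU by simp
  qed
  define T where "T = l1 + l2 + (e1 + e2) * V"
  have "(e1 + e2) * V \<le> (2 * B - 2) * V" using n1(3) n2(3) by (intro mult_le_mono1) simp
  then have "T < V + (2 * B - 2) * V" using l12 unfolding T_def by linarith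
  also have "\<dots> = (2 * B - 1) * V" using B by (cases B) (auto simp: algebra_simps)
  also have "\<dots> \<le> (2 * B) * V" by (intro mult_le_mono1) simp
  finally have T2W: "T < 2 * W" using WV by (simp add: algebra_simps)
  have LZ: "n1 mod Z + n2 mod Z = T + (r1 + r2) * W" using n1(1) n2(1) unfolding T_def
    by (simp add: algebra_simps)
  have "T + (r1 + r2) * W < 2 * W + (r1 + r2) * W" using T2W by simp
  also have "\<dots> = (r1 + r2 + 2) * W" by (simp add: algebra_simps)
  also have "\<dots> \<le> p * W" using r(1) by (rule mult_le_mono1)
  also have "\<dots> = Z" using ZW by simp
  finally have LZlt: "T + (r1 + r2) * W < Z" .
  have XL: "(n1 + n2) mod Z = T + (r1 + r2) * W"
    using LZ LZlt by (metis mod_add_eq mod_less)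
  have divL: "(T + (r1 + r2) * W) div W = r1 + r2 + T div W"
    using T2W by (cases "W = 0") auto
  have TW: "T div W \<le> 1" using less_mult_imp_div_less[OF T2W] by simp
  have l34: "n3 + l4 < V"
  proof -
    have "n3 + l4 < U + a4 * U" using n3 n4(2) by simp
    also have "\<dots> = (a4 + 1) * U" by simp
    also have "\<dots> \<le> p * U" using a(2) by (rule mult_le_mono1)
    finally show ?thesis using VU by simp
  qed
  have "e4 * V \<le> (B - 1) * V" using n4(3) by (intro mult_le_mono1) simp
  then have "n3 + l4 + e4 * V < V + (B - 1) * V" using l34 by linarith
  also have "\<dots> = W" using B WV by (cases B) (auto simp: algebra_simps)
  finally have x4: "n3 + l4 + e4 * V < W" .
  have "n3 + l4 + e4 * V + r4 * W < W + r4 * W" using x4 by simp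
  also have "\<dots> = (r4 + 1) * W" by simp
  also have "\<dots> \<le> p * W" using r(2) by (rule mult_le_mono1)
  also have "\<dots> = Z" using ZW by simp
  finally have RZlt: "n3 + l4 + e4 * V + r4 * W < Z" .
  have "n3 + n4 mod Z = n3 + l4 + e4 * V + r4 * W" using n4(1) by simp
  then have XR: "(n3 + n4) mod Z = n3 + l4 + e4 * V + r4 * W"
    using RZlt by (metis mod_add_right_eq mod_less)
  have "(n3 + l4 + e4 * V + r4 * W) div W = r4" using x4 by (simp add: div_digit)
  then have "r4 = r1 + r2 + T div W" using XL XR eq divL by simp
  then show ?thesis using TW by auto
qed

lemma T3_arith:
  fixes n1 n2 n3 n4 U V W B p l2 l4 e2 e4 a2 a4 :: nat
  assumes VU: "V = p * U" and WV: "W = V * B" and B: "B \<ge> 1"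
    and n2: "n2 mod W = l2 + e2 * V" "l2 < a2 * U" "e2 < B"
    and n4: "n4 mod W = l4 + e4 * V" "l4 < a4 * U" "e4 < B"
    and n1: "n1 < U" and n3: "n3 < U"
    and a: "a2 + 1 \<le> p" "a4 + 1 \<le> p"
    and eq: "n1 + n2 = n3 + n4"
  shows "e2 = e4"
proof -
  have key: "(x + y) mod W = x + l + e * V \<and> x + l < V"
    if "x < U" "y mod W = l + e * V" "l < a * U" "e < B" "a + 1 \<le> p" for x y l e a
  proof -
    have xl: "x + l < V"
    proof -
      have "x + l < U + a * U" using that by simp
      also have "\<dots> = (a + 1) * U" by simp
      also have "\<dots> \<le> p * U" using that(5) by (rule mult_le_mono1)
      finally show ?thesis using VU by simp
    qed
    have "e * V \<le> (B - 1) * V" using that(4) by (intro mult_le_mono1) simp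
    then have "x + l + e * V < V + (B - 1) * V" using xl by linarith
    also have "\<dots> = W" using B WV by (cases B) (auto simp: algebra_simps)
    finally have "x + l + e * V < W" .
    then show ?thesis using that(2) xl by (metis add.assoc mod_add_right_eq mod_less)
  qed
  have L: "(n1 + n2) mod W = n1 + l2 + e2 * V" "n1 + l2 < V" using key[OF n1 n2(1-3) a(1)] by auto
  have R: "(n3 + n4) mod W = n3 + l4 + e4 * V" "n3 + l4 < V" using key[OF n3 n4(1-3) a(2)] by auto
  have "(n1 + l2 + e2 * V) div V = e2" using L(2) by (simp add: div_digit)
  moreover have "(n3 + l4 + e4 * V) div V = e4" using R(2) by (simp add: div_digit)
  ultimately show ?thesis using L(1) R(1) eq by simp
qed

lemma aux_distrib: "(a + B * d) * (V::nat) = a * V + d * (B * V)" by (simp add: algebra_simps)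

lemma T4_arith:
  fixes n1 n2 n3 n4 V W B l1 l2 l3 l4 e1 e2 e3 e4 :: nat
  assumes WV: "W = V * B" and B: "B \<ge> 1"
    and n: "n1 mod W = l1 + e1 * V" "n2 mod W = l2 + e2 * V" "n3 mod W = l3 + e3 * V" "n4 mod W = l4 + e4 * V"
    and l: "l1 + l2 < V" "l3 + l4 < V"
    and eq: "n1 + n2 = n3 + n4"
  shows "(e1 + e2) mod B = (e3 + e4) mod B"
proof -
  have key: "((x + y) mod W) div V = (e + e') mod B"
    if "x mod W = l + e * V" "y mod W = l' + e' * V" "l + l' < V" for x y l l' e e'
  proof -
    have s1: "x mod W + y mod W = l + l' + (e + e') * V"
      using that(1,2) by (simp add: add_mult_distrib)
    have "(x + y) mod W = (x mod W + y mod W) mod W" by (simp add: mod_add_eq)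
    also have "\<dots> = (l + l' + (e + e') * V) mod (B * V)"
      using s1 WV by (simp add: mult.commute)
    finally have "(x + y) mod W = (l + l' + (e + e') * V) mod (B * V)" .
    also have "\<dots> = l + l' + ((e + e') mod B) * V"
    proof -
      have h: "(e + e') mod B + B * ((e + e') div B) = e + e'" by simp
      have "(e + e') * V = ((e + e') mod B + B * ((e + e') div B)) * V" by (simp only: h)
      also have "\<dots> = ((e + e') mod B) * V + ((e + e') div B) * (B * V)" by (rule aux_distrib)
      finally have "(e + e') * V = ((e + e') mod B) * V + ((e + e') div B) * (B * V)" .
      then have "l + l' + (e + e') * V = (l + l' + ((e + e') mod B) * V) + ((e + e') div B) * (B * V)"
        by simp
      moreover have "l + l' + ((e + e') mod B) * V < B * V"
      proof -
        have "(e + e') mod B < B" using B by simp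
        then have "(e + e') mod B \<le> B - 1" by arith
        then have "((e + e') mod B) * V \<le> (B - 1) * V" by (intro mult_le_mono1)
        then have "l + l' + ((e + e') mod B) * V < V + (B - 1) * V" using that(3) by linarith
        also have "\<dots> = B * V" using B by (cases B) auto
        finally show ?thesis .
      qed
      ultimately show ?thesis by (metis mod_less mod_mult_self1)
    qed
    finally have "(x + y) mod W = l + l' + ((e + e') mod B) * V" .
    then show ?thesis using that(3) by (simp add: div_digit)
  qed
  show ?thesis using key[OF n(1,2) l(1)] key[OF n(3,4) l(2)] eq by simp
qed

lemma numA: "(m::nat) \<ge> 200 \<Longrightarrow> 70 * (m + 4)^2 \<le> 100 * m^2"
proof -
  assume m: "m \<ge> 200"
  have "m * m \<ge> 200 * m" using m by simp
  moreover have "(m + 4)^2 = m * m + 8 * m + 16" "m^2 = m * m" by (simp_all add: power2_eq_square algebra_simps)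
  ultimately show ?thesis using m by linarith
qed

lemma numC: "(m::nat) \<ge> 200 \<Longrightarrow> a \<le> m + 2 \<Longrightarrow> 35 * (a + 1)^2 \<le> 100 * m^2"
proof -
  assume m: "m \<ge> 200" and a: "a \<le> m + 2"
  have "(a + 1)^2 \<le> (m + 3)^2" using a by (simp add: power_mono)
  moreover have "m * m \<ge> 200 * m" using m by simp
  moreover have "(m + 3)^2 = m * m + 6 * m + 9" "m^2 = m * m" by (simp_all add: power2_eq_square algebra_simps)
  ultimately show ?thesis using m by linarith
qed

lemma numB:
  fixes m u M B :: nat
  assumes m: "m \<ge> 200" and u: "u \<le> m + 2" and mM: "m \<le> M"
    and nN1: "\<not> 35 * ((u + 1)^2 + (M + 1)^2) \<le> 100 * m^2"
    and B: "M \<le> B + 1" "B \<le> M"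
  shows "u + 3 \<le> B" and "35 * (M + 1)^2 + 100 * (u + 2)^2 \<le> 100 * B^2"
proof -
  define T where "T = M + 1"
  have Y: "m * m \<ge> 200 * m" using m by simp
  have U1: "(u + 1)^2 \<le> m * m + 6 * m + 9"
  proof -
    have "(u + 1)^2 \<le> (m + 3)^2" using u by (simp add: power_mono)
    then show ?thesis by (simp add: power2_eq_square algebra_simps)
  qed
  have U2: "(u + 2)^2 \<le> m * m + 8 * m + 16"
  proof -
    have "(u + 2)^2 \<le> (m + 4)^2" using u by (simp add: power_mono)
    then show ?thesis by (simp add: power2_eq_square algebra_simps)
  qed
  have X: "(M + 1)^2 = T * T" unfolding T_def by (simp add: power2_eq_square)
  have n1: "35 * (u + 1)^2 + 35 * (T * T) > 100 * (m * m)"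
    using nN1 X by (simp add: power2_eq_square algebra_simps)
  have Tge: "T \<ge> m + 7"
  proof (rule ccontr)
    assume "\<not> T \<ge> m + 7"
    then have "T \<le> m + 6" by simp
    then have "T * T \<le> (m + 6) * (m + 6)" by (simp add: mult_le_mono)
    then have "T * T \<le> m * m + 12 * m + 36" by (simp add: algebra_simps)
    then show False using n1 U1 Y m by linarith
  qed
  show "u + 3 \<le> B" using Tge B u unfolding T_def by linarith
  have TT: "T * T \<ge> 200 * T" using Tge m by simp
  have BB: "B * B + 4 * B + 4 \<ge> T * T"
  proof -
    have "T \<le> B + 2" using B unfolding T_def by simp
    then have "T * T \<le> (B + 2) * (B + 2)" by (intro mult_le_mono)
    moreover have "(B + 2) * (B + 2) = B * B + 4 * B + 4" by (simp add: algebra_simps)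
    ultimately show ?thesis by linarith
  qed
  have BT: "B \<le> T" using B unfolding T_def by simp
  have "35 * (T * T) + 100 * (u + 2)^2 \<le> 100 * (B * B)"
    using n1 U1 U2 Y TT BB BT m by linarith
  then show "35 * (M + 1)^2 + 100 * (u + 2)^2 \<le> 100 * B^2" using X by (simp add: power2_eq_square)
qed

locale sidon_core =
  fixes F :: "'f set" and n lev deg :: "'f \<Rightarrow> nat"
    and C4 :: "'f \<Rightarrow> 'f \<Rightarrow> 'f \<Rightarrow> 'f \<Rightarrow> nat \<Rightarrow> bool" and C2 :: "'f \<Rightarrow> 'f \<Rightarrow> nat \<Rightarrow> bool"
  assumes lev_ge: "x \<in> F \<Longrightarrow> lev x \<ge> 200"
    and deg_lt: "x \<in> F \<Longrightarrow> 100 * deg x < 35 * (lev x + 1)^2"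
    and T1: "\<lbrakk>x \<in> F; y \<in> F; z \<in> F; w \<in> F; n x + n y = n z + n w; 2 \<le> i; i \<le> lev x; i \<le> lev y;
              i \<le> lev z; lev w + 3 \<le> i\<rbrakk> \<Longrightarrow> False"
    and T3: "\<lbrakk>x \<in> F; y \<in> F; z \<in> F; w \<in> F; n x + n y = n z + n w; 2 \<le> i; i \<le> lev y; lev x + 3 \<le> i;
              i \<le> lev w; lev z + 3 \<le> i\<rbrakk> \<Longrightarrow> C2 y w i"
    and T4: "\<lbrakk>x \<in> F; y \<in> F; z \<in> F; w \<in> F; n x + n y = n z + n w; 1 \<le> i; i \<le> lev x; i \<le> lev y;
              i \<le> lev z; i \<le> lev w\<rbrakk> \<Longrightarrow> C4 x y z w i"
    and SZ: "\<lbrakk>x \<in> F; y \<in> F; z \<in> F; w \<in> F; n x + n y = n z + n w; lev z + 2 \<le> lev y; lev w + 2 \<le> lev y\<rbrakk> \<Longrightarrow> False"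
    and DEG: "\<lbrakk>x \<in> F; y \<in> F; z \<in> F; w \<in> F; \<forall>i\<in>{1..m}. C4 x y z w i; deg x + deg y < m^2;
              deg z + deg w < m^2\<rbrakk> \<Longrightarrow> {x, y} = {z, w}"
    and D2: "\<lbrakk>y \<in> F; w \<in> F; \<forall>i\<in>{lo..hi}. C2 y w i; 1 \<le> lo; deg y + (lo - 1)^2 < hi^2;
              deg w + (lo - 1)^2 < hi^2\<rbrakk> \<Longrightarrow> y = w"
    and CAN: "\<lbrakk>x \<in> F; y \<in> F; z \<in> F; 1 \<le> i; C4 x y z y i\<rbrakk> \<Longrightarrow> C2 x z i"
begin

lemma lin2: "100 * (a::nat) < 35 * A \<Longrightarrow> 100 * b < 35 * B \<Longrightarrow> 35 * (A + B) \<le> 100 * M \<Longrightarrow> a + b < M"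
  unfolding distrib_left by linarith

lemma lin4: "(A::nat) \<le> Q \<Longrightarrow> B \<le> Q \<Longrightarrow> 70 * Q \<le> 100 * M \<Longrightarrow> 35 * (A + B) \<le> 100 * M"
  unfolding distrib_left by linarith

lemma lin5: "100 * (d::nat) < 35 * A \<Longrightarrow> A \<le> Xq \<Longrightarrow> 35 * Xq + 100 * U \<le> 100 * BB \<Longrightarrow> d + U < BB"
  by linarith

lemma deg_app:
  assumes F: "x \<in> F" "y \<in> F" "z \<in> F" "w \<in> F" and eq: "n x + n y = n z + n w"
    and m: "m \<le> lev x" "m \<le> lev y" "m \<le> lev z" "m \<le> lev w"
    and c1: "35 * ((lev x + 1)^2 + (lev y + 1)^2) \<le> 100 * m^2"
    and c2: "35 * ((lev z + 1)^2 + (lev w + 1)^2) \<le> 100 * m^2"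
  shows "{x, y} = {z, w}"
proof (rule DEG[OF F])
  show "\<forall>i\<in>{1..m}. C4 x y z w i" using T4[OF F eq] m by auto
  show "deg x + deg y < m^2" by (rule lin2[OF deg_lt[OF F(1)] deg_lt[OF F(2)] c1])
  show "deg z + deg w < m^2" by (rule lin2[OF deg_lt[OF F(3)] deg_lt[OF F(4)] c2])
qed

lemma core_wlog:
  assumes F: "x \<in> F" "y \<in> F" "z \<in> F" "w \<in> F" and eq: "n x + n y = n z + n w"
    and o: "lev x \<le> lev y" "lev z \<le> lev w" "lev w \<le> lev y"
  shows "{x, y} = {z, w}"
proof -
  define a1 M b1 b2 where "a1 = lev x" "M = lev y" "b1 = lev z" "b2 = lev w"
  define m u where "m = min a1 b1" "u = max a1 b1"
  have ge: "a1 \<ge> 200" "M \<ge> 200" "b1 \<ge> 200" "b2 \<ge> 200" "m \<ge> 200"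
    using lev_ge F unfolding a1_M_b1_b2_def m_u_def by auto
  have eq': "n x + n y = n w + n z" "n z + n w = n y + n x" using eq by simp_all
  have b2M: "M \<le> b2 + 1"
  proof (rule ccontr)
    assume "\<not> M \<le> b2 + 1"
    then show False using SZ[OF F eq] o unfolding a1_M_b1_b2_def by simp
  qed
  have smallcase: "{x, y} = {z, w}" if "M \<le> m + 3"
  proof (rule deg_app[OF F eq, of m])
    show "m \<le> lev x" "m \<le> lev y" "m \<le> lev z" "m \<le> lev w"
      using o unfolding a1_M_b1_b2_def m_u_def by auto
    have "(lev x + 1)^2 \<le> (m + 4)^2" "(lev y + 1)^2 \<le> (m + 4)^2"
         "(lev z + 1)^2 \<le> (m + 4)^2" "(lev w + 1)^2 \<le> (m + 4)^2"
      using that o unfolding a1_M_b1_b2_def m_u_def by (auto intro!: power_mono)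
    then show "35 * ((lev x + 1)^2 + (lev y + 1)^2) \<le> 100 * m^2"
      "35 * ((lev z + 1)^2 + (lev w + 1)^2) \<le> 100 * m^2"
      using lin4 numA[OF ge(5)] by blast+
  qed
  show ?thesis
  proof (cases "u \<ge> m + 3")
    case True
    show ?thesis
    proof (cases "b1 \<le> a1")
      case ba: True
      then have a1b1: "b1 + 3 \<le> a1" using True unfolding m_u_def by simp
      show ?thesis
      proof (cases "a1 \<le> b2")
        case True
        show ?thesis
          using T1[OF F(1,2,4,3) eq'(1), of a1] True a1b1 o ge unfolding a1_M_b1_b2_def by simp
      next
        case False
        then have "a1 = M" "M = b2 + 1" using b2M o unfolding a1_M_b1_b2_def by auto
        show ?thesis
        proof (cases "b1 + 3 \<le> b2")
          case True
          show ?thesis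
            using T1[OF F(1,2,4,3) eq'(1), of b2] True \<open>a1 = M\<close> \<open>M = b2 + 1\<close> o ge
            unfolding a1_M_b1_b2_def by simp
        next
          case False
          then have "M \<le> m + 3" using \<open>M = b2 + 1\<close> ba unfolding m_u_def by simp
          then show ?thesis by (rule smallcase)
        qed
      qed
    next
      case False
      then have "a1 + 3 \<le> b1" using True unfolding m_u_def by simp
      then show ?thesis
        using T1[OF F(3,4,2,1) eq'(2), of b1] o ge unfolding a1_M_b1_b2_def by simp
    qed
  next
    case False
    then have um: "u \<le> m + 2" by simp
    have mu: "m \<le> u" "a1 \<le> u" "b1 \<le> u" "m \<le> a1" "m \<le> b1" unfolding m_u_def by auto
    show ?thesis
    proof (cases "35 * ((u + 1)^2 + (M + 1)^2) \<le> 100 * m^2")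
      case True
      show ?thesis
      proof (rule deg_app[OF F eq, of m])
        show "m \<le> lev x" "m \<le> lev y" "m \<le> lev z" "m \<le> lev w"
          using o mu unfolding a1_M_b1_b2_def by auto
        have "(lev x + 1)^2 \<le> (u + 1)^2" "(lev z + 1)^2 \<le> (u + 1)^2" "(lev w + 1)^2 \<le> (M + 1)^2"
          using mu o unfolding a1_M_b1_b2_def by (auto intro!: power_mono)
        then show "35 * ((lev x + 1)^2 + (lev y + 1)^2) \<le> 100 * m^2"
          "35 * ((lev z + 1)^2 + (lev w + 1)^2) \<le> 100 * m^2"
          using True unfolding a1_M_b1_b2_def distrib_left by linarith+
      qed
    next
      case nN1: False
      have mM: "m \<le> M" using mu o unfolding a1_M_b1_b2_def by simp
      have b2le: "b2 \<le> M" using o unfolding a1_M_b1_b2_def by simp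
      have nb: "u + 3 \<le> b2" "35 * (M + 1)^2 + 100 * (u + 2)^2 \<le> 100 * b2^2"
        using numB[OF ge(5) um mM nN1 b2M b2le] by auto
      have C2yw: "\<forall>i\<in>{u + 3..b2}. C2 y w i"
      proof
        fix i assume i: "i \<in> {u + 3..b2}"
        show "C2 y w i"
          by (rule T3[OF F eq]) (use i mu o ge in \<open>auto simp: a1_M_b1_b2_def\<close>)
      qed
      have dy: "deg y + (u + 3 - 1)^2 < b2^2"
        using deg_lt[OF F(2)] nb(2) unfolding a1_M_b1_b2_def by simp
      have dw: "deg w + (u + 3 - 1)^2 < b2^2"
      proof -
        have "(lev w + 1)^2 \<le> (M + 1)^2" using b2le unfolding a1_M_b1_b2_def by (simp add: power_mono)
        then have "deg w + (u + 2)^2 < b2^2"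
          using lin5[OF deg_lt[OF F(4)] _ nb(2)] unfolding a1_M_b1_b2_def by simp
        then show ?thesis by simp
      qed
      have yw: "y = w" using D2[OF F(2) F(4) C2yw _ dy dw] by simp
      have eqxz: "n x + n y = n z + n y" using eq yw by simp
      have C2xz: "\<forall>i\<in>{1..m}. C2 x z i"
      proof
        fix i assume i: "i \<in> {1..m}"
        have "C4 x y z y i"
          by (rule T4[OF F(1,2,3,2) eqxz]) (use i mu o yw in \<open>auto simp: a1_M_b1_b2_def\<close>)
        then show "C2 x z i" using CAN[OF F(1,2,3)] i by simp
      qed
      have dx: "deg x + (1 - 1)^2 < m^2"
        using deg_lt[OF F(1)] numC[OF ge(5), of a1] mu um unfolding a1_M_b1_b2_def by simp
      have dz: "deg z + (1 - 1)^2 < m^2"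
        using deg_lt[OF F(3)] numC[OF ge(5), of b1] mu um unfolding a1_M_b1_b2_def by simp
      have "x = z" using D2[OF F(1) F(3) C2xz _ dx dz] by simp
      then show ?thesis using yw by simp
    qed
  qed
qed

theorem core:
  assumes F: "x \<in> F" "y \<in> F" "z \<in> F" "w \<in> F" and eq: "n x + n y = n z + n w"
  shows "{x, y} = {z, w}"
proof -
  have sym1: "{a, b} = {b, a}" for a b :: 'f by auto
  have L: "{x, y} = {z, w}" if F': "x \<in> F" "y \<in> F" "z \<in> F" "w \<in> F" and eq': "n x + n y = n z + n w"
     and o: "lev w \<le> lev y" "lev z \<le> lev y" "lev x \<le> lev y" for x y z w
  proof (cases "lev z \<le> lev w")
    case True
    then show ?thesis using core_wlog[OF F' eq'] o by simp
  next
    case False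
    then have "{x, y} = {w, z}" using core_wlog[OF F'(1,2,4,3)] eq' o by (simp add: add.commute)
    then show ?thesis by (metis insert_commute)
  qed
  consider "lev x \<le> lev y" "max (lev z) (lev w) \<le> lev y"
    | "lev y \<le> lev x" "max (lev z) (lev w) \<le> lev x"
    | "lev w \<le> lev z" "max (lev x) (lev y) \<le> lev z"
    | "lev z \<le> lev w" "max (lev x) (lev y) \<le> lev w"
    by linarith
  then show ?thesis
  proof cases
    case 1 then show ?thesis using L[OF F eq] by simp
  next
    case 2
    have "{y, x} = {z, w}" using L[OF F(2,1,3,4)] eq 2 by (simp add: add.commute)
    then show ?thesis by (metis insert_commute)
  next
    case 3
    have "{w, z} = {x, y}" using L[OF F(4,3,1,2)] eq 3 by (simp add: add.commute)
    then show ?thesis by (metis insert_commute)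
  next
    case 4
    have "{z, w} = {x, y}" using L[OF F(3,4,1,2)] eq 4 by simp
    then show ?thesis by (metis insert_commute)
  qed
qed

end

lemma Irr_degree: "f \<in> Irr R d \<Longrightarrow> degree f = d" by (simp add: Irr_def)

lemma Fam_E:
  assumes "f \<in> Fam R k"
  obtains i where "1 \<le> i" "cc * real k ^ 2 \<le> real (2 * i)" "real (2 * i) < cc * (real k + 1) ^ 2" "f \<in> Irr R (2 * i)"
  using assms unfolding Fam_def by blast

lemma Fam_unique:
  assumes "f \<in> Fam R k" "f \<in> Fam R k'" shows "k = k'"
proof -
  obtain i where i: "1 \<le> i" "cc * real k ^ 2 \<le> real (2 * i)" "real (2 * i) < cc * (real k + 1) ^ 2" "f \<in> Irr R (2 * i)"
    using Fam_E[OF assms(1)] by blast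
  obtain i' where i': "1 \<le> i'" "cc * real k' ^ 2 \<le> real (2 * i')" "real (2 * i') < cc * (real k' + 1) ^ 2" "f \<in> Irr R (2 * i')"
    using Fam_E[OF assms(2)] by blast
  have "2 * i = 2 * i'" using Irr_degree[OF i(4)] Irr_degree[OF i'(4)] by simp
  then have ii: "real (2 * i) = real (2 * i')" by simp
  have cc: "cc > 0" by (simp add: cc_def)
  show "k = k'"
  proof (rule ccontr)
    assume "k \<noteq> k'"
    then consider "k + 1 \<le> k'" | "k' + 1 \<le> k" by linarith
    then show False
    proof cases
      case 1
      then have "real k + 1 \<le> real k'" by simp
      then have "(real k + 1)^2 \<le> (real k')^2" by (intro power_mono) auto
      then have "cc * (real k + 1)^2 \<le> cc * real k' ^2" using cc by simp
      then show False using i(3) i'(2) ii by linarith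
    next
      case 2
      then have "real k' + 1 \<le> real k" by simp
      then have "(real k' + 1)^2 \<le> (real k)^2" by (intro power_mono) auto
      then have "cc * (real k' + 1)^2 \<le> cc * real k ^2" using cc by simp
      then show False using i'(3) i(2) ii by linarith
    qed
  qed
qed

lemma kof_eq: "f \<in> Fam R k \<Longrightarrow> kof R f = k"
  unfolding kof_def using Fam_unique by blast

lemma Fam_deg:
  assumes "f \<in> Fam R k"
  shows "\<exists>j\<ge>1. f \<in> Irr R (2 * j) \<and> 100 * degree f < 35 * (k + 1)^2"
proof -
  obtain i where i: "1 \<le> i" "real (2 * i) < cc * (real k + 1) ^ 2" "f \<in> Irr R (2 * i)"
    using Fam_E[OF assms] by blast
  have "100 * real (2 * i) < 100 * (cc * (real k + 1) ^ 2)" using i(2) by simp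
  also have "100 * (cc * (real k + 1) ^ 2) = 35 * (real k + 1)^2" by (simp add: cc_def)
  finally have "100 * real (2 * i) < 35 * (real k + 1)^2" .
  moreover have "real (100 * (2 * i)) = 100 * real (2 * i)" by simp
  moreover have "real (35 * (k + 1)^2) = 35 * (real k + 1)^2" by simp
  ultimately have "real (100 * (2 * i)) < real (35 * (k + 1)^2)" by linarith
  then have "100 * (2 * i) < 35 * (k + 1)^2" by (simp only: of_nat_less_iff)
  then show ?thesis using i Irr_degree[OF i(3)] by auto
qed

lemma sum_odd_shift:
  "1 \<le> lo \<Longrightarrow> lo \<le> hi + 1 \<Longrightarrow> (\<Sum>i\<in>{lo..hi}. 2 * i - 1) + (lo - 1)^2 = (hi::nat)^2"
proof (induction hi)
  case 0
  then have "lo = 1" by simp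
  then show ?case by simp
next
  case (Suc hi)
  show ?case
  proof (cases "lo \<le> hi + 1")
    case True
    have "{lo..Suc hi} = insert (Suc hi) {lo..hi}" using True by auto
    then have "(\<Sum>i\<in>{lo..Suc hi}. 2 * i - 1) = (2 * Suc hi - 1) + (\<Sum>i\<in>{lo..hi}. 2 * i - 1)" by simp
    then show ?thesis using Suc.IH[OF Suc.prems(1) True] by (simp add: power2_eq_square)
  next
    case False
    then have "lo = Suc hi + 1" using Suc.prems by simp
    then show ?thesis by simp
  qed
qed

locale setting = field +
  fixes p :: nat and A :: "nat set" and C0 :: real and g w :: "nat \<Rightarrow> 'a list"
    and r :: "'a list \<Rightarrow> nat \<Rightarrow> nat" and s :: "'a list \<Rightarrow> nat"
  assumes fin: "finite (carrier R)" and qC: "real (card (carrier R)) \<ge> C0" and C0: "C0 \<ge> 1000"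
    and p2: "p \<ge> 2" and Asub: "A \<subseteq> {1 .. p div 2 - 1}"
    and Aprop: "\<forall>a\<in>A. \<forall>x\<in>A. \<forall>y\<in>A. a \<noteq> x + y \<and> a \<noteq> x + y + 1"
    and gw: "\<forall>i \<ge> 1. g i \<in> Irr R (2 * i - 1) \<and> is_gen R (g i) (w i)"
    and rs: "\<forall>k f. real k \<ge> C0 \<and> f \<in> Fam R k \<longrightarrow>
              (\<forall>i \<in> {1..k}. r f i \<in> A) \<and> s f \<in> {1 .. card (carrier R) ^ (3 * k)}"
begin

abbreviation "qq \<equiv> card (carrier R)"
abbreviation "bb \<equiv> bseq (card (carrier R)) p"
abbreviation "DD0 \<equiv> DD (bseq (card (carrier R)) p)"
abbreviation "nn \<equiv> nf R p g w r s"
abbreviation "ee f i \<equiv> dlog R (g i) (w i) f"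

lemma q2: "qq \<ge> 2" using qC C0 by linarith

lemma A_bound: "a \<in> A \<Longrightarrow> 1 \<le> a \<and> 2 * (a + 1) \<le> p"
proof -
  assume "a \<in> A"
  then have a: "1 \<le> a" "a \<le> p div 2 - 1" using Asub by auto
  then show ?thesis using a by presburger
qed

lemma gi: "1 \<le> i \<Longrightarrow> g i \<in> Irr R (2 * i - 1)" and wi: "1 \<le> i \<Longrightarrow> is_gen R (g i) (w i)"
  using gw by auto

lemma FF_lev: "f \<in> FF R C0 \<Longrightarrow> real (kof R f) \<ge> C0 \<and> f \<in> Fam R (kof R f)"
proof -
  assume "f \<in> FF R C0"
  then obtain k where k: "real k \<ge> C0" "f \<in> Fam R k" unfolding FF_def by blast
  then show ?thesis using kof_eq[OF k(2)] by simp
qed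

lemma lev200: "f \<in> FF R C0 \<Longrightarrow> kof R f \<ge> 200"
  using FF_lev C0 by fastforce

lemma FF_deg: "f \<in> FF R C0 \<Longrightarrow> \<exists>j\<ge>1. f \<in> Irr R (2 * j) \<and> 100 * degree f < 35 * (kof R f + 1)^2"
  using FF_lev Fam_deg by blast

lemma FF_carrier: "f \<in> FF R C0 \<Longrightarrow> f \<in> carrier (poly_ring R)"
  using FF_deg Irr_carrier by blast

lemma FF_rs: "f \<in> FF R C0 \<Longrightarrow> (\<forall>i\<in>{1..kof R f}. r f i \<in> A) \<and> 1 \<le> s f \<and> s f \<le> qq ^ (3 * kof R f)"
  using FF_lev rs by auto

lemma FF_ee: assumes "f \<in> FF R C0" "1 \<le> i"
  shows "ee f i < qq ^ (2 * i - 1) - 1" "pcong R (g i) (w i [^]\<^bsub>poly_ring R\<^esub> ee f i) f"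
proof -
  obtain j where j: "j \<ge> 1" "f \<in> Irr R (2 * j)" using FF_deg[OF assms(1)] by blast
  have ne: "2 * i - 1 \<noteq> 2 * j" using assms(2) by presburger
  show "ee f i < qq ^ (2 * i - 1) - 1" "pcong R (g i) (w i [^]\<^bsub>poly_ring R\<^esub> ee f i) f"
    using dlog_facts[OF fin gi[OF assms(2)] _ wi[OF assms(2)] j(2) ne] assms(2) by auto
qed

lemma nn_eq: "nn f = genbase bb (map (phi (kof R f) (ee f) (r f) (s f)) [0..<2 * kof R f + 1])"
  unfolding nf_def phi_def Let_def by simp

lemma digits:
  assumes f: "f \<in> FF R C0"
  shows "\<And>t. t < kof R f \<Longrightarrow> nn f mod DD0 (2 * t + 2) = nn f mod DD0 (2 * t) + ee f (Suc t) * DD0 (2 * t) + r f (Suc t) * DD0 (2 * t + 1)"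
    and "\<And>t. t < kof R f \<Longrightarrow> nn f mod DD0 (2 * t + 1) = nn f mod DD0 (2 * t) + ee f (Suc t) * DD0 (2 * t)"
    and "\<And>t. t < kof R f \<Longrightarrow> nn f mod DD0 (2 * t + 2) < (r f (Suc t) + 1) * DD0 (2 * t + 1)"
    and "DD0 (2 * kof R f) \<le> nn f" and "nn f < DD0 (2 * kof R f + 3)"
proof -
  let ?k = "kof R f"
  have k1: "?k \<ge> 1" using lev200[OF f] by simp
  have E: "\<And>i. 1 \<le> i \<Longrightarrow> i \<le> ?k \<Longrightarrow> ee f i < qq ^ (2 * i - 1) - 1" using FF_ee[OF f] by blast
  have Rr: "\<And>i. 1 \<le> i \<Longrightarrow> i \<le> ?k \<Longrightarrow> r f i < p"
  proof -
    fix i assume "1 \<le> i" "i \<le> ?k"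
    then have "r f i \<in> A" using FF_rs[OF f] by auto
    then show "r f i < p" using A_bound by fastforce
  qed
  have sf: "1 \<le> s f" "s f \<le> qq ^ (3 * ?k)" using FF_rs[OF f] by auto
  note dn = digits_nf[of qq p ?k "ee f" "r f" "s f", OF q2 p2 k1 E Rr sf]
  show "\<And>t. t < ?k \<Longrightarrow> nn f mod DD0 (2 * t + 2) = nn f mod DD0 (2 * t) + ee f (Suc t) * DD0 (2 * t) + r f (Suc t) * DD0 (2 * t + 1)"
    using dn(1) unfolding nn_eq by blast
  show "\<And>t. t < ?k \<Longrightarrow> nn f mod DD0 (2 * t + 1) = nn f mod DD0 (2 * t) + ee f (Suc t) * DD0 (2 * t)"
    using dn(2) unfolding nn_eq by blast
  show "\<And>t. t < ?k \<Longrightarrow> nn f mod DD0 (2 * t + 2) < (r f (Suc t) + 1) * DD0 (2 * t + 1)"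
    using dn(3) unfolding nn_eq by blast
  show "DD0 (2 * ?k) \<le> nn f" using dn(4) unfolding nn_eq by blast
  show "nn f < DD0 (2 * ?k + 3)" using dn(5) unfolding nn_eq by blast
qed

lemma bpos: "bb l > 0" using bseq_pos[OF q2] p2 by simp

lemma D_Suc: "DD0 (Suc j) = DD0 j * bb (Suc j)" by (rule DD_Suc)

lemma b_even: "bb (2 * t + 2) = p" by (simp add: bseq_def)
lemma b_odd: "bb (2 * t + 1) = qq ^ (2 * t + 1) - 1" by (simp add: bseq_def)

lemma b_odd_ge1: "bb (2 * t + 1) \<ge> 1" using bpos[of "2 * t + 1"] by simp

lemma absent: "f \<in> FF R C0 \<Longrightarrow> kof R f + 3 \<le> i \<Longrightarrow> nn f < DD0 (2 * i - 3)"
proof -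
  assume f: "f \<in> FF R C0" and i: "kof R f + 3 \<le> i"
  have "DD0 (2 * kof R f + 3) \<le> DD0 (2 * i - 3)" using DD_mono[of bb] bpos i by simp
  then show ?thesis using digits(5)[OF f] by simp
qed

end

context setting
begin

lemma A_bound2: assumes "a \<in> A" shows "a + a + 2 \<le> p"
proof -
  have "2 * (a + 1) \<le> p" using A_bound[OF assms] by simp
  then show ?thesis by presburger
qed

lemma VU_rel: "DD0 (2 * Suc u) = p * DD0 (2 * u + 1)"
proof -
  have "2 * Suc u = Suc (2 * u + 1)" by simp
  then have "DD0 (2 * Suc u) = DD0 (2 * u + 1) * bb (Suc (2 * u + 1))" by (simp only: D_Suc)
  also have "bb (Suc (2 * u + 1)) = p" using b_even[of u] by simp
  finally show ?thesis by simp
qed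

lemma WV_rel: "DD0 (2 * t + 1) = DD0 (2 * t) * bb (2 * t + 1)"
  using D_Suc[of "2 * t"] by simp

lemma ZW_rel: "DD0 (2 * t + 2) = p * DD0 (2 * t + 1)"
proof -
  have "DD0 (2 * t + 2) = DD0 (2 * t + 1) * bb (2 * t + 2)" using D_Suc[of "2 * t + 1"] by simp
  then show ?thesis using b_even[of t] by simp
qed

lemma ee_bound: "f \<in> FF R C0 \<Longrightarrow> ee f (Suc t) < bb (2 * t + 1)"
  using FF_ee(1)[of f "Suc t"] b_odd[of t] by simp

lemma rA: "f \<in> FF R C0 \<Longrightarrow> 1 \<le> j \<Longrightarrow> j \<le> kof R f \<Longrightarrow> r f j \<in> A"
  using FF_rs by auto

lemma low_bound: "f \<in> FF R C0 \<Longrightarrow> Suc u < kof R f \<Longrightarrow>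
    nn f mod DD0 (2 * Suc u) < (r f (Suc u) + 1) * DD0 (2 * u + 1)"
  using digits(3)[of f u] by simp

lemma sT1:
  assumes F: "x \<in> FF R C0" "y \<in> FF R C0" "z \<in> FF R C0" "v \<in> FF R C0"
    and eq: "nn x + nn y = nn z + nn v"
    and i: "2 \<le> i" "i \<le> kof R x" "i \<le> kof R y" "i \<le> kof R z" "kof R v + 3 \<le> i"
  shows False
proof -
  define u where "u = i - 2"
  define t where "t = Suc u"
  have it: "i = Suc t" using i(1) unfolding t_def u_def by simp
  let ?U = "DD0 (2 * u + 1)" and ?V = "DD0 (2 * t)" and ?W = "DD0 (2 * t + 1)" and ?Z = "DD0 (2 * t + 2)"
  let ?B = "bb (2 * t + 1)"
  have VU: "?V = p * ?U" unfolding t_def by (rule VU_rel)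
  have WV: "?W = ?V * ?B" by (rule WV_rel)
  have ZW: "?Z = p * ?W" by (rule ZW_rel)
  have B: "?B \<ge> 1" by (rule b_odd_ge1)
  have pres: "nn f mod ?Z = nn f mod ?V + ee f (Suc t) * ?V + r f (Suc t) * ?W"
      "nn f mod ?V < (r f t + 1) * ?U" "ee f (Suc t) < ?B" "r f (Suc t) \<in> A" "r f t \<in> A"
    if f: "f \<in> FF R C0" "i \<le> kof R f" for f
  proof -
    have tk: "t < kof R f" using f(2) it by simp
    show "nn f mod ?Z = nn f mod ?V + ee f (Suc t) * ?V + r f (Suc t) * ?W" using digits(1)[OF f(1) tk] .
    show "nn f mod ?V < (r f t + 1) * ?U" using low_bound[OF f(1)] tk unfolding t_def by simp
    show "ee f (Suc t) < ?B" by (rule ee_bound[OF f(1)])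
    show "r f (Suc t) \<in> A" using rA[OF f(1)] f(2) it by simp
    show "r f t \<in> A" using rA[OF f(1)] f(2) it unfolding t_def by simp
  qed
  note px = pres[OF F(1) i(2)] and py = pres[OF F(2) i(3)] and pz = pres[OF F(3) i(4)]
  have absv: "nn v < ?U"
  proof -
    have "2 * i - 3 = 2 * u + 1" using i(1) unfolding u_def by simp
    then show ?thesis using absent[OF F(4) i(5)] by simp
  qed
  have ab: "\<And>a. a \<in> A \<Longrightarrow> a + a + 2 \<le> p" by (rule A_bound2)
  have "r z (Suc t) = r x (Suc t) + r y (Suc t) \<or> r z (Suc t) = r x (Suc t) + r y (Suc t) + 1"
  proof (rule T1_arith[OF VU WV ZW B px(1) px(2) px(3) py(1) py(2) py(3) pz(1) pz(2) pz(3) absv])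
    show "r x t + 1 + (r y t + 1) \<le> p" using ab[OF px(5)] ab[OF py(5)] by linarith
    show "r z t + 1 + 1 \<le> p" using ab[OF pz(5)] by linarith
    show "r x (Suc t) + r y (Suc t) + 2 \<le> p" using ab[OF px(4)] ab[OF py(4)] by linarith
    show "r z (Suc t) + 1 \<le> p" using ab[OF pz(4)] by linarith
    show "nn x + nn y = nn v + nn z" using eq by simp
  qed
  then show False using Aprop px(4) py(4) pz(4) by blast
qed

lemma sT3:
  assumes F: "x \<in> FF R C0" "y \<in> FF R C0" "z \<in> FF R C0" "v \<in> FF R C0"
    and eq: "nn x + nn y = nn z + nn v"
    and i: "2 \<le> i" "i \<le> kof R y" "kof R x + 3 \<le> i" "i \<le> kof R v" "kof R z + 3 \<le> i"
  shows "pcong R (g i) y v"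
proof -
  define u where "u = i - 2"
  define t where "t = Suc u"
  have it: "i = Suc t" using i(1) unfolding t_def u_def by simp
  let ?U = "DD0 (2 * u + 1)" and ?V = "DD0 (2 * t)" and ?W = "DD0 (2 * t + 1)"
  let ?B = "bb (2 * t + 1)"
  have VU: "?V = p * ?U" unfolding t_def by (rule VU_rel)
  have WV: "?W = ?V * ?B" by (rule WV_rel)
  have B: "?B \<ge> 1" by (rule b_odd_ge1)
  have pres: "nn f mod ?W = nn f mod ?V + ee f (Suc t) * ?V"
      "nn f mod ?V < (r f t + 1) * ?U" "ee f (Suc t) < ?B" "r f t \<in> A"
    if f: "f \<in> FF R C0" "i \<le> kof R f" for f
  proof -
    have tk: "t < kof R f" using f(2) it by simp
    show "nn f mod ?W = nn f mod ?V + ee f (Suc t) * ?V" using digits(2)[OF f(1) tk] .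
    show "nn f mod ?V < (r f t + 1) * ?U" using low_bound[OF f(1)] tk unfolding t_def by simp
    show "ee f (Suc t) < ?B" by (rule ee_bound[OF f(1)])
    show "r f t \<in> A" using rA[OF f(1)] f(2) it unfolding t_def by simp
  qed
  note py = pres[OF F(2) i(2)] and pv = pres[OF F(4) i(4)]
  have i3: "2 * i - 3 = 2 * u + 1" using i(1) unfolding u_def by simp
  have absx: "nn x < ?U" using absent[OF F(1) i(3)] i3 by simp
  have absz: "nn z < ?U" using absent[OF F(3) i(5)] i3 by simp
  have ab: "\<And>a. a \<in> A \<Longrightarrow> a + a + 2 \<le> p" by (rule A_bound2)
  have "ee y (Suc t) = ee v (Suc t)"
  proof (rule T3_arith[OF VU WV B py(1) py(2) py(3) pv(1) pv(2) pv(3) absx absz _ _ eq])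
    show "r y t + 1 + 1 \<le> p" using ab[OF py(4)] by linarith
    show "r v t + 1 + 1 \<le> p" using ab[OF pv(4)] by linarith
  qed
  then have e: "ee y i = ee v i" using it by simp
  have i1: "1 \<le> i" using i(1) by simp
  have wc: "w i \<in> carrier (poly_ring R)" using wi[OF i1] unfolding is_gen_def by simp
  show ?thesis
    using cong_from_eq[OF Irr_carrier[OF gi[OF i1]] wc FF_carrier[OF F(2)] FF_carrier[OF F(4)]
          FF_ee(2)[OF F(2) i1]] FF_ee(2)[OF F(4) i1] e by simp
qed

lemma sT4:
  assumes F: "x \<in> FF R C0" "y \<in> FF R C0" "z \<in> FF R C0" "v \<in> FF R C0"
    and eq: "nn x + nn y = nn z + nn v"
    and i: "1 \<le> i" "i \<le> kof R x" "i \<le> kof R y" "i \<le> kof R z" "i \<le> kof R v"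
  shows "pcong R (g i) (x \<otimes>\<^bsub>poly_ring R\<^esub> y) (z \<otimes>\<^bsub>poly_ring R\<^esub> v)"
proof -
  define t where "t = i - 1"
  have it: "i = Suc t" using i(1) unfolding t_def by simp
  let ?V = "DD0 (2 * t)" and ?W = "DD0 (2 * t + 1)" and ?B = "bb (2 * t + 1)"
  have WV: "?W = ?V * ?B" by (rule WV_rel)
  have B: "?B \<ge> 1" by (rule b_odd_ge1)
  have pres: "nn f mod ?W = nn f mod ?V + ee f (Suc t) * ?V" "ee f (Suc t) < ?B"
    if f: "f \<in> FF R C0" "i \<le> kof R f" for f
  proof -
    have tk: "t < kof R f" using f(2) it by simp
    show "nn f mod ?W = nn f mod ?V + ee f (Suc t) * ?V" using digits(2)[OF f(1) tk] .
    show "ee f (Suc t) < ?B" by (rule ee_bound[OF f(1)])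
  qed
  have low2: "nn f1 mod ?V + nn f2 mod ?V < ?V"
    if f: "f1 \<in> FF R C0" "f2 \<in> FF R C0" "i \<le> kof R f1" "i \<le> kof R f2" for f1 f2
  proof (cases t)
    case 0
    then show ?thesis by simp
  next
    case (Suc u)
    have tk1: "Suc u < kof R f1" and tk2: "Suc u < kof R f2" using f it Suc by auto
    have l1: "nn f1 mod ?V < (r f1 (Suc u) + 1) * DD0 (2 * u + 1)" using low_bound[OF f(1) tk1] Suc by simp
    have l2: "nn f2 mod ?V < (r f2 (Suc u) + 1) * DD0 (2 * u + 1)" using low_bound[OF f(2) tk2] Suc by simp
    have a1: "r f1 (Suc u) + r f1 (Suc u) + 2 \<le> p" using A_bound2 rA[OF f(1)] tk1 by simp
    have a2: "r f2 (Suc u) + r f2 (Suc u) + 2 \<le> p" using A_bound2 rA[OF f(2)] tk2 by simp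
    have "nn f1 mod ?V + nn f2 mod ?V < (r f1 (Suc u) + 1) * DD0 (2 * u + 1) + (r f2 (Suc u) + 1) * DD0 (2 * u + 1)"
      using l1 l2 by linarith
    also have "\<dots> = ((r f1 (Suc u) + 1) + (r f2 (Suc u) + 1)) * DD0 (2 * u + 1)" by (simp add: algebra_simps)
    also have "\<dots> \<le> p * DD0 (2 * u + 1)" using a1 a2 by (intro mult_le_mono1) linarith
    also have "\<dots> = ?V" using VU_rel[of u] Suc by simp
    finally show ?thesis .
  qed
  have m: "(ee x (Suc t) + ee y (Suc t)) mod ?B = (ee z (Suc t) + ee v (Suc t)) mod ?B"
    by (rule T4_arith[OF WV B pres(1)[OF F(1) i(2)] pres(1)[OF F(2) i(3)] pres(1)[OF F(3) i(4)]
          pres(1)[OF F(4) i(5)] low2[OF F(1,2) i(2,3)] low2[OF F(3,4) i(4,5)] eq])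
  have Bq: "?B = qq ^ (2 * i - 1) - 1" using b_odd[of t] it by simp
  have d1: "2 * i - 1 \<ge> 1" using i(1) by simp
  show ?thesis
    using cong_from_esum[OF fin gi[OF i(1)] d1 wi[OF i(1)] FF_carrier[OF F(1)] FF_carrier[OF F(2)]
          FF_carrier[OF F(3)] FF_carrier[OF F(4)] FF_ee(2)[OF F(1) i(1)] FF_ee(2)[OF F(2) i(1)]
          FF_ee(2)[OF F(3) i(1)] FF_ee(2)[OF F(4) i(1)]] m Bq it by simp
qed

lemma sSZ:
  assumes F: "x \<in> FF R C0" "y \<in> FF R C0" "z \<in> FF R C0" "v \<in> FF R C0"
    and eq: "nn x + nn y = nn z + nn v"
    and l: "kof R z + 2 \<le> kof R y" "kof R v + 2 \<le> kof R y"
  shows False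
proof -
  define M where "M = kof R y"
  have M1: "M \<ge> 1" using l unfolding M_def by simp
  have bpos': "\<And>l. bb l > 0" by (rule bpos)
  have z: "nn z < DD0 (2 * M - 1)"
  proof -
    have "DD0 (2 * kof R z + 3) \<le> DD0 (2 * M - 1)" using DD_mono[of bb] bpos' l(1) unfolding M_def by simp
    then show ?thesis using digits(5)[OF F(3)] by simp
  qed
  have v: "nn v < DD0 (2 * M - 1)"
  proof -
    have "DD0 (2 * kof R v + 3) \<le> DD0 (2 * M - 1)" using DD_mono[of bb] bpos' l(2) unfolding M_def by simp
    then show ?thesis using digits(5)[OF F(4)] by simp
  qed
  have DM: "DD0 (2 * M) = DD0 (2 * M - 1) * p"
  proof -
    have "2 * M = Suc (2 * M - 1)" using M1 by simp
    then have "DD0 (2 * M) = DD0 (2 * M - 1) * bb (Suc (2 * M - 1))" by (metis D_Suc)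
    moreover have "bb (Suc (2 * M - 1)) = p" using M1 by (simp add: bseq_def)
    ultimately show ?thesis by simp
  qed
  have "nn z + nn v < 2 * DD0 (2 * M - 1)" using z v by simp
  also have "\<dots> \<le> p * DD0 (2 * M - 1)" using p2 by (intro mult_le_mono1)
  also have "\<dots> = DD0 (2 * M)" using DM by simp
  also have "\<dots> \<le> nn y" using digits(4)[OF F(2)] unfolding M_def .
  finally show False using eq by simp
qed

lemma sDEG:
  assumes F: "x \<in> FF R C0" "y \<in> FF R C0" "z \<in> FF R C0" "v \<in> FF R C0"
    and cg: "\<forall>i\<in>{1..m}. pcong R (g i) (x \<otimes>\<^bsub>poly_ring R\<^esub> y) (z \<otimes>\<^bsub>poly_ring R\<^esub> v)"
    and d1: "degree x + degree y < m^2" and d2: "degree z + degree v < m^2"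
  shows "{x, y} = {z, v}"
proof -
  interpret UP: domain "poly_ring R" by (rule UPd)
  obtain jx where jx: "x \<in> Irr R (2 * jx)" using FF_deg[OF F(1)] by blast
  obtain jy where jy: "y \<in> Irr R (2 * jy)" using FF_deg[OF F(2)] by blast
  obtain jz where jz: "z \<in> Irr R (2 * jz)" using FF_deg[OF F(3)] by blast
  obtain jv where jv: "v \<in> Irr R (2 * jv)" using FF_deg[OF F(4)] by blast
  have ne: "\<And>f d. f \<in> Irr R d \<Longrightarrow> f \<noteq> []" using pirr_not_unit Irr_carrier Irr_pirr by blast
  have sm: "(\<Sum>i\<in>{1..m}. 2 * i - 1) = m^2" using sum_odd_shift[of 1 m] by simp
  have "x \<otimes>\<^bsub>poly_ring R\<^esub> y = z \<otimes>\<^bsub>poly_ring R\<^esub> v"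
  proof (rule eq_from_congs[of "{1..m}" g])
    show "\<And>i. i \<in> {1..m} \<Longrightarrow> g i \<in> Irr R (2 * i - 1)" using gi by simp
    show "finite {1..m}" by simp
    show "\<And>i. i \<in> {1..m} \<Longrightarrow> 1 \<le> i" by simp
    show "x \<otimes>\<^bsub>poly_ring R\<^esub> y \<in> carrier (poly_ring R)" using FF_carrier F by simp
    show "z \<otimes>\<^bsub>poly_ring R\<^esub> v \<in> carrier (poly_ring R)" using FF_carrier F by simp
    show "\<And>i. i \<in> {1..m} \<Longrightarrow> pcong R (g i) (x \<otimes>\<^bsub>poly_ring R\<^esub> y) (z \<otimes>\<^bsub>poly_ring R\<^esub> v)" using cg by blast
    show "degree (x \<otimes>\<^bsub>poly_ring R\<^esub> y) < (\<Sum>i\<in>{1..m}. 2 * i - 1)"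
      using degree_mult[OF FF_carrier[OF F(1)] FF_carrier[OF F(2)] ne[OF jx] ne[OF jy]] d1 sm by simp
    show "degree (z \<otimes>\<^bsub>poly_ring R\<^esub> v) < (\<Sum>i\<in>{1..m}. 2 * i - 1)"
      using degree_mult[OF FF_carrier[OF F(3)] FF_carrier[OF F(4)] ne[OF jz] ne[OF jv]] d2 sm by simp
  qed
  then show ?thesis by (rule two_two_unique[OF jx jy jz jv])
qed

lemma sD2:
  assumes F: "y \<in> FF R C0" "v \<in> FF R C0"
    and cg: "\<forall>i\<in>{lo..hi}. pcong R (g i) y v" and lo: "1 \<le> lo"
    and d1: "degree y + (lo - 1)^2 < hi^2" and d2: "degree v + (lo - 1)^2 < hi^2"
  shows "y = v"
proof -
  have lohi: "lo \<le> hi + 1"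
  proof (rule ccontr)
    assume "\<not> lo \<le> hi + 1"
    then have "hi \<le> lo - 1" by simp
    then have "hi^2 \<le> (lo - 1)^2" by (simp add: power_mono)
    then show False using d1 by linarith
  qed
  have sm: "(\<Sum>i\<in>{lo..hi}. 2 * i - 1) + (lo - 1)^2 = hi^2" by (rule sum_odd_shift[OF lo lohi])
  show ?thesis
  proof (rule eq_from_congs[of "{lo..hi}" g])
    show "\<And>i. i \<in> {lo..hi} \<Longrightarrow> g i \<in> Irr R (2 * i - 1)" using gi lo by simp
    show "finite {lo..hi}" by simp
    show "\<And>i. i \<in> {lo..hi} \<Longrightarrow> 1 \<le> i" using lo by simp
    show "y \<in> carrier (poly_ring R)" "v \<in> carrier (poly_ring R)" using FF_carrier F by auto
    show "\<And>i. i \<in> {lo..hi} \<Longrightarrow> pcong R (g i) y v" using cg by blast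
    show "degree y < (\<Sum>i\<in>{lo..hi}. 2 * i - 1)" using d1 sm by linarith
    show "degree v < (\<Sum>i\<in>{lo..hi}. 2 * i - 1)" using d2 sm by linarith
  qed
qed

lemma sCAN:
  assumes F: "x \<in> FF R C0" "y \<in> FF R C0" "z \<in> FF R C0" and i: "1 \<le> i"
    and h: "pcong R (g i) (x \<otimes>\<^bsub>poly_ring R\<^esub> y) (z \<otimes>\<^bsub>poly_ring R\<^esub> y)"
  shows "pcong R (g i) x z"
proof -
  obtain jy where jy: "y \<in> Irr R (2 * jy)" using FF_deg[OF F(2)] by blast
  have ne: "2 * i - 1 \<noteq> 2 * jy" using i by presburger
  show ?thesis
    by (rule cong_cancel[OF Irr_carrier[OF gi[OF i]] Irr_pirr[OF gi[OF i]] FF_carrier[OF F(1)]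
          FF_carrier[OF F(2)] FF_carrier[OF F(3)] Irr_ndvd[OF gi[OF i] jy ne] h])
qed

end

sublocale setting \<subseteq> SC: sidon_core "FF R C0" "nf R p g w r s" "kof R" "\<lambda>f. degree f"
  "\<lambda>x y z v i. pcong R (g i) (x \<otimes>\<^bsub>poly_ring R\<^esub> y) (z \<otimes>\<^bsub>poly_ring R\<^esub> v)" "\<lambda>y v i. pcong R (g i) y v"
proof (unfold_locales, goal_cases)
  case (1 x) then show ?case by (rule lev200)
next
  case (2 x) then show ?case using FF_deg by blast
next
  case (3 x y z v i) then show ?case by (rule sT1)
next
  case (4 x y z v i) then show ?case by (rule sT3)
next
  case (5 x y z v i) then show ?case by (rule sT4)
next
  case (6 x y z v) then show ?case by (rule sSZ)
next
  case (7 x y z v m) then show ?case by (rule sDEG)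
next
  case (8 y v lo hi) then show ?case by (rule sD2)
next
  case (9 x y z i) then show ?case by (rule sCAN)
qed

context setting
begin

lemma main_eq:
  "\<forall>f1 \<in> FF R C0. \<forall>f2 \<in> FF R C0. \<forall>f3 \<in> FF R C0. \<forall>f4 \<in> FF R C0.
     nf R p g w r s f1 + nf R p g w r s f2 = nf R p g w r s f3 + nf R p g w r s f4 \<longrightarrow> {f1, f2} = {f3, f4}"
  using SC.core by blast

lemma main_sidon: "sidon (nf R p g w r s ` FF R C0)"
  unfolding sidon_def
proof (rule conjI; intro ballI impI)
  fix x assume "x \<in> nn ` FF R C0"
  then obtain f where f: "f \<in> FF R C0" "x = nn f" by blast
  have "DD0 (2 * kof R f) > 0" using DD_pos bpos by blast
  then show "0 < x" using digits(4)[OF f(1)] f(2) by linarith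
next
  fix a b c d assume a: "a \<in> nn ` FF R C0" and b: "b \<in> nn ` FF R C0" and c: "c \<in> nn ` FF R C0"
    and d: "d \<in> nn ` FF R C0" and ab: "a \<le> b" and cd: "c \<le> d" and e: "a + b = c + d"
  obtain f1 where f1: "f1 \<in> FF R C0" "a = nn f1" using a by blast
  obtain f2 where f2: "f2 \<in> FF R C0" "b = nn f2" using b by blast
  obtain f3 where f3: "f3 \<in> FF R C0" "c = nn f3" using c by blast
  obtain f4 where f4: "f4 \<in> FF R C0" "d = nn f4" using d by blast
  have "{f1, f2} = {f3, f4}" using SC.core[OF f1(1) f2(1) f3(1) f4(1)] e f1 f2 f3 f4 by simp
  then have "(f1 = f3 \<and> f2 = f4) \<or> (f1 = f4 \<and> f2 = f3)" by (metis doubleton_eq_iff)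
  then show "a = c \<and> b = d" using f1 f2 f3 f4 ab cd e by auto
qed

end

theorem lemma4p1:
  fixes p :: nat and A :: "nat set"
  assumes "Factorial_Ring.prime p"
    and "A \<subseteq> {1 .. p div 2 - 1}"
    and "\<forall>a\<in>A. \<forall>x\<in>A. \<forall>y\<in>A. a \<noteq> x + y \<and> a \<noteq> x + y + 1"
    and "\<exists>m. {m .. m + p + 1} \<subseteq> {x + y + z | x y z. x \<in> A \<and> y \<in> A \<and> z \<in> A}"
  shows "\<exists>C::real. \<forall>C0 \<ge> C. C0 > 100 * real p \<longrightarrow>
    (\<forall>(R :: ('a, 'b) ring_scheme) g w r s.
       field R \<and> finite (carrier R) \<and> real (card (carrier R)) \<ge> C0
       \<and> (\<forall>i \<ge> 1. g i \<in> Irr R (2 * i - 1) \<and> is_gen R (g i) (w i))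
       \<and> (\<forall>k f. real k \<ge> C0 \<and> f \<in> Fam R k \<longrightarrow>
              (\<forall>i \<in> {1..k}. r f i \<in> A) \<and> s f \<in> {1 .. card (carrier R) ^ (3 * k)})
       \<longrightarrow>
       (\<forall>f1 \<in> FF R C0. \<forall>f2 \<in> FF R C0. \<forall>f3 \<in> FF R C0. \<forall>f4 \<in> FF R C0.
          nf R p g w r s f1 + nf R p g w r s f2 = nf R p g w r s f3 + nf R p g w r s f4
          \<longrightarrow> {f1, f2} = {f3, f4})
       \<and> sidon (nf R p g w r s ` FF R C0))"
  proof (intro exI[of _ "1000::real"] allI impI)
  fix C0 :: real assume C0: "C0 \<ge> 1000" and C0p: "C0 > 100 * real p"
  fix R :: "('a, 'b) ring_scheme" and g w :: "nat \<Rightarrow> 'a list" and r :: "'a list \<Rightarrow> nat \<Rightarrow> nat" and s :: "'a list \<Rightarrow> nat"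
  assume H: "field R \<and> finite (carrier R) \<and> real (card (carrier R)) \<ge> C0
       \<and> (\<forall>i \<ge> 1. g i \<in> Irr R (2 * i - 1) \<and> is_gen R (g i) (w i))
       \<and> (\<forall>k f. real k \<ge> C0 \<and> f \<in> Fam R k \<longrightarrow>
              (\<forall>i \<in> {1..k}. r f i \<in> A) \<and> s f \<in> {1 .. card (carrier R) ^ (3 * k)})"
  have p2: "p \<ge> 2" using assms(1) prime_ge_2_nat by blast
  have "setting R p A C0 g w r s"
    unfolding setting_def setting_axioms_def using H C0 p2 assms(2,3) by blast
  then interpret S: setting R p A C0 g w r s .
  show "(\<forall>f1 \<in> FF R C0. \<forall>f2 \<in> FF R C0. \<forall>f3 \<in> FF R C0. \<forall>f4 \<in> FF R C0.
          nf R p g w r s f1 + nf R p g w r s f2 = nf R p g w r s f3 + nf R p g w r s f4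
          \<longrightarrow> {f1, f2} = {f3, f4})
       \<and> sidon (nf R p g w r s ` FF R C0)"
    using S.main_eq S.main_sidon by blast
qed

end
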